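(* Assume Assumptions A.1–A.3. Suppose there exist nonnegative constants $c_1,\dots,c_p$ with $\sum_{i=1}^p c_i<1$, a constant $r>0$ and $K<\infty$ such that $$E(|\xi_1|^r\mid X_0=x)\le K+\sum_{i=1}^p c_i|x_i|^r\qquad\text{for all }x=(x_1,\dots,x_p)\in\mathbb{R}^p.$$ Then there exist positive constants $d_1,\dots,d_p$ such that $\{X_t\}$ is $V$-uniformly ergodic with $V(x)=1+\sum_{i=1}^p d_i|x_i|^r$. Furthermore, the stationary distribution of $\{X_t\}$ has finite $r$th moment.
   Context: Model: $\xi_t=a(\xi_{t-1},\dots,\xi_{t-p})+b(\xi_{t-1},\dots,\xi_{t-p})e_t$, where $a,b:\mathbb{R}^p\to\mathbb{R}$ are measurable (finitely piecewise continuous) functions, $\{e_t\}_{t\ge1}$ is an i.i.d. sequence independent of the initial state, and $X_t=(\xi_t,\dots,\xi_{t-p+1})\in\mathbb{R}^p$ is the associated Markov chain. $\|\cdot\|$ is the Euclidean norm. Assumption A.1: $e_t$ has a Lebesgue density $f$ which is locally bounded away from $0$ (bounded below by a positive constant on each compact set); $b$ is positive, locally bounded and locally bounded away from $0$. Assumption A.2: $\sup_{u\in\mathbb{R}}(1+|u|)f(u)<\infty$ and $E(|e_1|^{r_0})<\infty$ for some $r_0>0$. Assumption A.3: $a(x)/(1+\|x\|)$ and $b(x)/(1+\|x\|)$ are bounded on $\mathbb{R}^p$. For a function $V\ge1$, the chain is called $V$-uniformly ergodic if it has a stationary distribution $\Gamma$ and there exist $M<\infty$, $\beta<1$ with $\sup_{|g|\le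 V}|E(g(X_n)\mid X_0=x)-\int g\,d\Gamma|\le M\beta^nV(x)$ for all $n$ and $x$ (in particular $\sup_A|P(X_n\in A\mid X_0=x)-\Gamma(A)|\le M\beta^nV(x)$). *)

theory Defs
  imports "HOL-Probability.Probability"
begin

text \<open>State space R^p, coded as functions nat => real supported on {..<p};
  component x_i of the paper (i = 1..p) is x (i - 1).\<close>

definition stateM :: "nat \<Rightarrow> (nat \<Rightarrow> real) measure" where
  "stateM p = PiM {..<p} (\<lambda>_. borel)"

definition pnorm :: "nat \<Rightarrow> (nat \<Rightarrow> real) \<Rightarrow> real" where
  "pnorm p x = sqrt (\<Sum>i<p. (x i)\<^sup>2)"

definition shift_in :: "nat \<Rightarrow> (nat \<Rightarrow> real) \<Rightarrow> real \<Rightarrow> (nat \<Rightarrow> real)" where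
  "shift_in p x y = (\<lambda>i\<in>{..<p}. if i = 0 then y else x (i - 1))"

text \<open>One-step transition kernel of X_t: xi_1 = a(x) + b(x) e_1, e_1 with density f.\<close>
definition ar_step :: "nat \<Rightarrow> ((nat \<Rightarrow> real) \<Rightarrow> real) \<Rightarrow> ((nat \<Rightarrow> real) \<Rightarrow> real)
    \<Rightarrow> (real \<Rightarrow> real) \<Rightarrow> (nat \<Rightarrow> real) \<Rightarrow> (nat \<Rightarrow> real) measure" where
  "ar_step p a b f x = distr (density lborel f) (stateM p) (\<lambda>u. shift_in p x (a x + b x * u))"

primrec ar_nstep :: "nat \<Rightarrow> ((nat \<Rightarrow> real) \<Rightarrow> real) \<Rightarrow> ((nat \<Rightarrow> real) \<Rightarrow> real)
    \<Rightarrow> (real \<Rightarrow> real) \<Rightarrow> nat \<Rightarrow> (nat \<Rightarrow> real) \<Rightarrow> (nat \<Rightarrow> real) measure" where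
  "ar_nstep p a b f 0 x = return (stateM p) x"
| "ar_nstep p a b f (Suc n) x = bind (ar_nstep p a b f n x) (ar_step p a b f)"

definition fin_piecewise_continuous :: "nat \<Rightarrow> ((nat \<Rightarrow> real) \<Rightarrow> real) \<Rightarrow> bool" where
  "fin_piecewise_continuous p g \<longleftrightarrow>
     (\<exists>\<A>. finite \<A> \<and> \<A> \<subseteq> sets (stateM p) \<and> \<Union>\<A> = space (stateM p) \<and>
        (\<forall>A\<in>\<A>. \<forall>x\<in>A. \<forall>\<epsilon>>0. \<exists>\<delta>>0. \<forall>y\<in>A.
            pnorm p (\<lambda>i. y i - x i) < \<delta> \<longrightarrow> \<bar>g y - g x\<bar> < \<epsilon>))"

definition ar_stationary :: "nat \<Rightarrow> ((nat \<Rightarrow> real) \<Rightarrow> real) \<Rightarrow> ((nat \<Rightarrow> real) \<Rightarrow> real)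
    \<Rightarrow> (real \<Rightarrow> real) \<Rightarrow> (nat \<Rightarrow> real) measure \<Rightarrow> bool" where
  "ar_stationary p a b f \<Gamma> \<longleftrightarrow>
     prob_space \<Gamma> \<and> sets \<Gamma> = sets (stateM p) \<and> bind \<Gamma> (ar_step p a b f) = \<Gamma>"

definition V_uniformly_ergodic :: "nat \<Rightarrow> ((nat \<Rightarrow> real) \<Rightarrow> real) \<Rightarrow> ((nat \<Rightarrow> real) \<Rightarrow> real)
    \<Rightarrow> (real \<Rightarrow> real) \<Rightarrow> ((nat \<Rightarrow> real) \<Rightarrow> real) \<Rightarrow> (nat \<Rightarrow> real) measure \<Rightarrow> bool" where
  "V_uniformly_ergodic p a b f V \<Gamma> \<longleftrightarrow>
     ar_stationary p a b f \<Gamma> \<and>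
     (\<exists>M::real. \<exists>\<beta>::real. 0 \<le> \<beta> \<and> \<beta> < 1 \<and>
        (\<forall>n x g. x \<in> space (stateM p) \<longrightarrow> g \<in> borel_measurable (stateM p) \<longrightarrow>
           (\<forall>y\<in>space (stateM p). \<bar>g y\<bar> \<le> V y) \<longrightarrow>
           integrable (ar_nstep p a b f n x) g \<and> integrable \<Gamma> g \<and>
           \<bar>(\<integral>y. g y \<partial>ar_nstep p a b f n x) - (\<integral>y. g y \<partial>\<Gamma>)\<bar> \<le> M * \<beta> ^ n * V x))"

end

theory Submission
  imports Defs
begin

lemma space_stateM: "space (stateM p) = PiE {..<p} (\<lambda>_. UNIV)"
  by (simp add: stateM_def space_PiM)

lemma shift_in_space: "shift_in p x y \<in> space (stateM p)"
  by (simp add: space_stateM shift_in_def)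

locale arch =
  fixes p :: nat and a b :: "(nat \<Rightarrow> real) \<Rightarrow> real" and f :: "real \<Rightarrow> real"
  assumes a_meas[measurable]: "a \<in> borel_measurable (stateM p)"
    and b_meas[measurable]: "b \<in> borel_measurable (stateM p)"
    and f_meas[measurable]: "f \<in> borel_measurable borel"
    and f_nonneg: "\<And>u. f u \<ge> 0"
    and f_dens: "(\<integral>\<^sup>+ u. ennreal (f u) \<partial>lborel) = 1"
begin

abbreviation "S \<equiv> stateM p"
abbreviation "E \<equiv> density lborel f"
abbreviation "P \<equiv> ar_step p a b f"
abbreviation "Pn \<equiv> ar_nstep p a b f"

lemma prob_E: "prob_space E"
proof (rule prob_spaceI)
  have "emeasure E (space E) = (\<integral>\<^sup>+ u. ennreal (f u) * indicator UNIV u \<partial>lborel)"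
    by (subst emeasure_density) auto
  then show "emeasure E (space E) = 1" using f_dens by simp
qed

lemma E_in_prob_algebra: "E \<in> space (prob_algebra E)"
  using prob_E by (simp add: space_prob_algebra)

lemma shift_meas: "(\<lambda>(x, u). shift_in p x (a x + b x * u)) \<in> S \<Otimes>\<^sub>M E \<rightarrow>\<^sub>M S"
proof -
  have "(\<lambda>z. \<lambda>i\<in>{..<p}. if i = 0 then a (fst z) + b (fst z) * snd z else fst z (i - 1))
        \<in> S \<Otimes>\<^sub>M E \<rightarrow>\<^sub>M S"
    unfolding stateM_def
  proof (rule measurable_restrict)
    fix i assume i: "i \<in> {..<p}"
    show "(\<lambda>z. if i = 0 then a (fst z) + b (fst z) * snd z else fst z (i - 1)) \<in> borel_measurable (PiM {..<p} (\<lambda>_. borel) \<Otimes>\<^sub>M E)"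
    proof (cases "i = 0")
      case True
      have "(\<lambda>z. a (fst z) + b (fst z) * snd z) \<in> borel_measurable (PiM {..<p} (\<lambda>_. borel) \<Otimes>\<^sub>M E)"
        using a_meas b_meas unfolding stateM_def by measurable
      then show ?thesis using True by simp
    next
      case False
      then have "i - 1 \<in> {..<p}" using i by auto
      then have "(\<lambda>z. fst z (i - 1)) \<in> borel_measurable (PiM {..<p} (\<lambda>_. borel) \<Otimes>\<^sub>M E)"
        by measurable
      then show ?thesis using False by simp
    qed
  qed
  then show ?thesis by (simp add: shift_in_def case_prod_beta' cong: measurable_cong)
qed

lemma P_meas: "P \<in> S \<rightarrow>\<^sub>M prob_algebra S"
proof -
  have "(\<lambda>x. distr ((\<lambda>_. E) x) S (\<lambda>u. shift_in p x (a x + b x * u))) \<in> S \<rightarrow>\<^sub>M prob_algebra S"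
    apply (rule measurable_distr_prob_space2[where M=E])
    using E_in_prob_algebra apply (simp add: measurable_const)
    using shift_meas by simp
  then show ?thesis by (simp add: ar_step_def[abs_def])
qed

lemma Pn_meas: "Pn n \<in> S \<rightarrow>\<^sub>M prob_algebra S"
proof (induction n)
  case 0
  then show ?case by (simp add: measurable_return_prob_space)
next
  case (Suc n)
  then show ?case using P_meas by (simp add: measurable_bind_prob_space)
qed

lemma P_sub: "P \<in> S \<rightarrow>\<^sub>M subprob_algebra S"
  using P_meas measurable_prob_algebraD by blast

lemma Pn_sub: "Pn n \<in> S \<rightarrow>\<^sub>M subprob_algebra S"
  using Pn_meas measurable_prob_algebraD by blast

lemma prob_P: "x \<in> space S \<Longrightarrow> prob_space (P x)"
  using measurable_space[OF P_meas] by (simp add: space_prob_algebra)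
lemma sets_P: "x \<in> space S \<Longrightarrow> sets (P x) = sets S"
  using measurable_space[OF P_meas] by (simp add: space_prob_algebra)
lemma prob_Pn: "x \<in> space S \<Longrightarrow> prob_space (Pn n x)"
  using measurable_space[OF Pn_meas] by (simp add: space_prob_algebra)
lemma sets_Pn: "x \<in> space S \<Longrightarrow> sets (Pn n x) = sets S"
  using measurable_space[OF Pn_meas] by (simp add: space_prob_algebra)
lemma space_Pn: "x \<in> space S \<Longrightarrow> space (Pn n x) = space S"
  using sets_Pn sets_eq_imp_space_eq by blast
lemma space_P: "x \<in> space S \<Longrightarrow> space (P x) = space S"
  using sets_P sets_eq_imp_space_eq by blast

lemma shift_meas1: "x \<in> space S \<Longrightarrow> (\<lambda>u. shift_in p x (a x + b x * u)) \<in> E \<rightarrow>\<^sub>M S"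
proof -
  assume x: "x \<in> space S"
  have "(\<lambda>u. (x, u)) \<in> E \<rightarrow>\<^sub>M S \<Otimes>\<^sub>M E"
    using x by (intro measurable_Pair measurable_const measurable_ident_sets) auto
  from measurable_comp[OF this shift_meas] show ?thesis by (simp add: o_def)
qed

lemma nn_P: 
  assumes g: "g \<in> borel_measurable S" and x: "x \<in> space S"
  shows "(\<integral>\<^sup>+y. g y \<partial>P x) = (\<integral>\<^sup>+u. ennreal (f u) * g (shift_in p x (a x + b x * u)) \<partial>lborel)"
proof -
  have "(\<integral>\<^sup>+y. g y \<partial>P x) = (\<integral>\<^sup>+u. g (shift_in p x (a x + b x * u)) \<partial>E)"
    unfolding ar_step_def by (rule nn_integral_distr[OF shift_meas1[OF x]]) (use g in simp)
  also have "\<dots> = (\<integral>\<^sup>+u. ennreal (f u) * g (shift_in p x (a x + b x * u)) \<partial>lborel)"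
    using measurable_comp[OF shift_meas1[OF x] g]
    by (subst nn_integral_density) (auto simp: o_def)
  finally show ?thesis .
qed

lemma meas_Pn_cong: "x \<in> space S \<Longrightarrow> K \<in> S \<rightarrow>\<^sub>M X \<Longrightarrow> K \<in> Pn n x \<rightarrow>\<^sub>M X"
  using measurable_cong_sets[OF sets_Pn refl] by blast

lemma nn_Pn_Suc:
  assumes g: "g \<in> borel_measurable S" and x: "x \<in> space S"
  shows "(\<integral>\<^sup>+y. g y \<partial>Pn (Suc n) x) = (\<integral>\<^sup>+y. (\<integral>\<^sup>+z. g z \<partial>P y) \<partial>Pn n x)"
  by (simp only: ar_nstep.simps) (rule nn_integral_bind[OF g meas_Pn_cong[OF x P_sub]])

lemma Pn_add: "x \<in> space S \<Longrightarrow> Pn (m + k) x = bind (Pn m x) (Pn k)"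
proof (induction k)
  case 0
  have "Pn m x = bind (Pn m x) (return S)"
    using sets_Pn[OF 0] by (simp add: bind_return'')
  then show ?case by simp
next
  case (Suc k)
  have "Pn (m + Suc k) x = bind (bind (Pn m x) (Pn k)) P"
    using Suc by simp
  also have "\<dots> = bind (Pn m x) (\<lambda>y. bind (Pn k y) P)"
  proof (rule bind_assoc[where N=S and R=S])
    show "Pn k \<in> Pn m x \<rightarrow>\<^sub>M subprob_algebra S"
      using meas_Pn_cong[OF Suc.prems Pn_sub] .
  qed (rule P_sub)
  finally show ?case by simp
qed

lemma nn_Pn_add:
  assumes g: "g \<in> borel_measurable S" and x: "x \<in> space S"
  shows "(\<integral>\<^sup>+y. g y \<partial>Pn (m + k) x) = (\<integral>\<^sup>+y. (\<integral>\<^sup>+z. g z \<partial>Pn k y) \<partial>Pn m x)"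
  by (simp only: Pn_add[OF x]) (rule nn_integral_bind[OF g meas_Pn_cong[OF x Pn_sub]])

end


lemma integral_bind_real:
  fixes g :: "'b \<Rightarrow> real"
  assumes K[measurable]: "K \<in> M \<rightarrow>\<^sub>M subprob_algebra N" and g[measurable]: "g \<in> borel_measurable N"
  and intK: "\<And>y. y \<in> space M \<Longrightarrow> integrable (K y) g"
  and intB: "integrable (bind M K) g"
  shows "integrable M (\<lambda>y. \<integral>z. g z \<partial>K y) \<and> (\<integral>z. g z \<partial>bind M K) = (\<integral>y. (\<integral>z. g z \<partial>K y) \<partial>M)"
proof -
  define A where "A y = (\<integral>\<^sup>+z. ennreal (g z) \<partial>K y)" for y
  define B where "B y = (\<integral>\<^sup>+z. ennreal (- g z) \<partial>K y)" for y
  have mA[measurable]: "A \<in> borel_measurable M" unfolding A_def by measurable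
  have mB[measurable]: "B \<in> borel_measurable M" unfolding B_def by measurable
  have finA: "A y \<noteq> \<infinity>" if "y \<in> space M" for y
    using intK[OF that] unfolding real_integrable_def A_def by auto
  have finB: "B y \<noteq> \<infinity>" if "y \<in> space M" for y
    using intK[OF that] unfolding real_integrable_def B_def by auto
  have eA: "(\<integral>\<^sup>+y. A y \<partial>M) = (\<integral>\<^sup>+z. ennreal (g z) \<partial>bind M K)"
    unfolding A_def by (rule nn_integral_bind[where B=N, symmetric]) auto
  have eB: "(\<integral>\<^sup>+y. B y \<partial>M) = (\<integral>\<^sup>+z. ennreal (- g z) \<partial>bind M K)"
    unfolding B_def by (rule nn_integral_bind[where B=N, symmetric]) auto
  have fA: "(\<integral>\<^sup>+y. A y \<partial>M) \<noteq> \<infinity>" and fB: "(\<integral>\<^sup>+y. B y \<partial>M) \<noteq> \<infinity>"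
    using intB unfolding real_integrable_def eA eB by auto
  have cA: "(\<integral>\<^sup>+y. ennreal (enn2real (A y)) \<partial>M) = (\<integral>\<^sup>+y. A y \<partial>M)"
    by (intro nn_integral_cong) (use finA in \<open>auto simp: ennreal_enn2real_if infinity_ennreal_def\<close>)
  have cB: "(\<integral>\<^sup>+y. ennreal (enn2real (B y)) \<partial>M) = (\<integral>\<^sup>+y. B y \<partial>M)"
    by (intro nn_integral_cong) (use finB in \<open>auto simp: ennreal_enn2real_if infinity_ennreal_def\<close>)
  have iA: "integrable M (\<lambda>y. enn2real (A y))"
    by (rule integrableI_nonneg) (use cA fA in \<open>auto simp: less_top\<close>)
  have iB: "integrable M (\<lambda>y. enn2real (B y))"
    by (rule integrableI_nonneg) (use cB fB in \<open>auto simp: less_top\<close>)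
  have IA: "(\<integral>y. enn2real (A y) \<partial>M) = enn2real (\<integral>\<^sup>+y. A y \<partial>M)"
    by (subst integral_eq_nn_integral) (auto simp: cA)
  have IB: "(\<integral>y. enn2real (B y) \<partial>M) = enn2real (\<integral>\<^sup>+y. B y \<partial>M)"
    by (subst integral_eq_nn_integral) (auto simp: cB)
  have G: "(\<integral>z. g z \<partial>K y) = enn2real (A y) - enn2real (B y)" if "y \<in> space M" for y
    unfolding A_def B_def by (rule real_lebesgue_integral_def[OF intK[OF that]])
  have "integrable M (\<lambda>y. enn2real (A y) - enn2real (B y))" using iA iB by auto
  then have I1: "integrable M (\<lambda>y. \<integral>z. g z \<partial>K y)"
    using Bochner_Integration.integrable_cong[OF refl, of M "\<lambda>y. enn2real (A y) - enn2real (B y)" "\<lambda>y. \<integral>z. g z \<partial>K y"] G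
    by auto
  have "(\<integral>y. (\<integral>z. g z \<partial>K y) \<partial>M) = (\<integral>y. enn2real (A y) - enn2real (B y) \<partial>M)"
    by (intro Bochner_Integration.integral_cong) (auto simp: G)
  also have "\<dots> = enn2real (\<integral>\<^sup>+y. A y \<partial>M) - enn2real (\<integral>\<^sup>+y. B y \<partial>M)"
    using iA iB IA IB by simp
  also have "\<dots> = (\<integral>z. g z \<partial>bind M K)"
    unfolding eA eB by (rule real_lebesgue_integral_def[OF intB, symmetric])
  finally show ?thesis using I1 by simp
qed



lemma harris_step:
  fixes S :: "'a measure" and \<kappa> :: "'a \<Rightarrow> 'a measure" and V \<phi> :: "'a \<Rightarrow> real"
  assumes kp: "\<And>x. x \<in> space S \<Longrightarrow> prob_space (\<kappa> x)"
    and ks: "\<And>x. x \<in> space S \<Longrightarrow> sets (\<kappa> x) = sets S"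
    and Vm[measurable]: "V \<in> borel_measurable S" and V0: "\<And>x. x \<in> space S \<Longrightarrow> 0 \<le> V x"
    and drift: "\<And>x. x \<in> space S \<Longrightarrow> (\<integral>\<^sup>+y. V y \<partial>\<kappa> x) \<le> ennreal (\<gamma> * V x + K)"
    and doeb: "\<And>x y g h t. x \<in> space S \<Longrightarrow> y \<in> space S \<Longrightarrow> V x + V y \<le> R \<Longrightarrow>
        g \<in> borel_measurable S \<Longrightarrow> h \<in> borel_measurable S \<Longrightarrow>
        (\<forall>z\<in>space S. 0 \<le> g z \<and> 0 \<le> h z \<and> t \<le> g z + h z) \<Longrightarrow> 0 \<le> t \<Longrightarrow>
        ennreal (\<epsilon> * t) \<le> (\<integral>\<^sup>+z. g z \<partial>\<kappa> x) + (\<integral>\<^sup>+z. h z \<partial>\<kappa> y)"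
    and g0: "0 \<le> \<gamma>" and gg: "\<gamma> \<le> \<gamma>0" and K0: "0 \<le> K"
    and KR: "2 * K \<le> (\<gamma>0 - \<gamma>) * R" and b0: "0 < \<beta>" and bK: "2 * \<beta> * K \<le> \<epsilon>"
    and \<rho>1: "(2 + \<beta> * \<gamma>0 * R) / (2 + \<beta> * R) \<le> \<rho>" and \<rho>2: "1 - \<epsilon> / 2 \<le> \<rho>" and \<rho>3: "\<gamma>0 \<le> \<rho>"
    and g01: "\<gamma>0 \<le> 1" and R0: "0 \<le> R"
    and \<phi>m[measurable]: "\<phi> \<in> borel_measurable S"
    and \<phi>B: "\<And>x y. x \<in> space S \<Longrightarrow> y \<in> space S \<Longrightarrow> \<bar>\<phi> x - \<phi> y\<bar> \<le> B * (2 + \<beta> * V x + \<beta> * V y)"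
    and x: "x \<in> space S" and y: "y \<in> space S"
  shows "integrable (\<kappa> x) \<phi> \<and> \<bar>(\<integral>z. \<phi> z \<partial>\<kappa> x) - (\<integral>z. \<phi> z \<partial>\<kappa> y)\<bar> \<le> \<rho> * B * (2 + \<beta> * V x + \<beta> * V y)"
proof -
  have B0: "0 \<le> B"
  proof -
    have "0 \<le> B * (2 + \<beta> * V x + \<beta> * V x)" using \<phi>B[OF x x] by simp
    moreover have "0 < 2 + \<beta> * V x + \<beta> * V x"
    proof -
      have "0 \<le> \<beta> * V x" using V0[OF x] b0 by simp
      then show ?thesis by linarith
    qed
    ultimately show ?thesis by (simp add: zero_le_mult_iff)
  qed
  define c where "c = (SUP z\<in>space S. \<phi> z - B * (1 + \<beta> * V z))"
  have bdd: "bdd_above ((\<lambda>z. \<phi> z - B * (1 + \<beta> * V z)) ` space S)"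
  proof (rule bdd_aboveI2)
    fix z assume "z \<in> space S"
    show "\<phi> z - B * (1 + \<beta> * V z) \<le> \<phi> x + B * (1 + \<beta> * V x)"
      using \<phi>B[OF \<open>z \<in> space S\<close> x] by (simp add: algebra_simps abs_le_iff)
  qed
  have c1: "\<phi> z - c \<le> B * (1 + \<beta> * V z)" if "z \<in> space S" for z
    using cSUP_upper[OF that bdd] unfolding c_def by simp
  have c2: "c - \<phi> z \<le> B * (1 + \<beta> * V z)" if z: "z \<in> space S" for z
  proof -
    have "c \<le> \<phi> z + B * (1 + \<beta> * V z)"
      unfolding c_def
    proof (rule cSUP_least)
      show "space S \<noteq> {}" using x by auto
      fix w assume "w \<in> space S"
      show "\<phi> w - B * (1 + \<beta> * V w) \<le> \<phi> z + B * (1 + \<beta> * V z)"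
        using \<phi>B[OF \<open>w \<in> space S\<close> z] by (simp add: algebra_simps abs_le_iff)
    qed
    then show ?thesis by simp
  qed
  define u where "u z = \<phi> z - c" for z
  define w where "w z = B * (1 + \<beta> * V z)" for z
  have um[measurable]: "u \<in> borel_measurable S" unfolding u_def by measurable
  have wm[measurable]: "w \<in> borel_measurable S" unfolding w_def by measurable
  have uw: "\<bar>u z\<bar> \<le> w z" if "z \<in> space S" for z
    using c1[OF that] c2[OF that] unfolding u_def w_def by auto
  have wB: "B \<le> w z" if "z \<in> space S" for z
    using V0[OF that] b0 B0 unfolding w_def by (simp add: algebra_simps)
  have facts: "integrable (\<kappa> v) V \<and> integrable (\<kappa> v) u \<and> integrable (\<kappa> v) w \<and> integrable (\<kappa> v) \<phi> \<and>
      (\<integral>z. w z \<partial>\<kappa> v) \<le> B * (1 + \<beta> * (\<gamma> * V v + K)) \<and>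
      (\<integral>z. \<phi> z \<partial>\<kappa> v) = (\<integral>z. u z \<partial>\<kappa> v) + c" if v: "v \<in> space S" for v
  proof -
    interpret prob_space "\<kappa> v" using kp[OF v] .
    have sp: "space (\<kappa> v) = space S" using ks[OF v] sets_eq_imp_space_eq by blast
    have mc: "\<And>h. h \<in> borel_measurable S \<Longrightarrow> h \<in> borel_measurable (\<kappa> v)"
      using measurable_cong_sets[OF ks[OF v] refl] by blast
    have mV: "V \<in> borel_measurable (\<kappa> v)" by (rule mc) measurable
    have mu: "u \<in> borel_measurable (\<kappa> v)" by (rule mc) measurable
    have mw: "w \<in> borel_measurable (\<kappa> v)" by (rule mc) measurable
    have mphi: "\<phi> \<in> borel_measurable (\<kappa> v)" by (rule mc) measurable
    have nV: "(\<integral>\<^sup>+y. V y \<partial>\<kappa> v) < \<infinity>" by (rule le_less_trans[OF drift[OF v]]) simp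
    have iV: "integrable (\<kappa> v) V"
      by (rule integrableI_nonneg[OF mV]) (use V0 sp nV in auto)
    have IV: "(\<integral>z. V z \<partial>\<kappa> v) \<le> \<gamma> * V v + K"
    proof -
      have "ennreal (\<integral>z. V z \<partial>\<kappa> v) = (\<integral>\<^sup>+y. V y \<partial>\<kappa> v)"
        by (rule nn_integral_eq_integral[symmetric]) (use iV V0 sp in auto)
      then have "ennreal (\<integral>z. V z \<partial>\<kappa> v) \<le> ennreal (\<gamma> * V v + K)" using drift[OF v] by simp
      moreover have "0 \<le> \<gamma> * V v + K" using g0 V0[OF v] K0 by simp
      ultimately show ?thesis by (simp add: ennreal_le_iff)
    qed
    have iw: "integrable (\<kappa> v) w" unfolding w_def using iV by simp
    have iu: "integrable (\<kappa> v) u"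
    proof (rule Bochner_Integration.integrable_bound[OF iw mu])
      show "AE z in \<kappa> v. norm (u z) \<le> norm (w z)"
      proof (rule AE_I2)
        fix z assume "z \<in> space (\<kappa> v)"
        then have "\<bar>u z\<bar> \<le> w z" using uw sp by simp
        then show "norm (u z) \<le> norm (w z)" by simp
      qed
    qed
    have iphi: "integrable (\<kappa> v) \<phi>"
    proof -
      have "integrable (\<kappa> v) (\<lambda>z. u z + c)" using iu by simp
      then show ?thesis unfolding u_def by simp
    qed
    have Iw: "(\<integral>z. w z \<partial>\<kappa> v) = B * (1 + \<beta> * (\<integral>z. V z \<partial>\<kappa> v))"
    proof -
      have "(\<integral>z. w z \<partial>\<kappa> v) = B * (\<integral>z. 1 + \<beta> * V z \<partial>\<kappa> v)"
        unfolding w_def by (rule integral_mult_right_zero)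
      also have "(\<integral>z. 1 + \<beta> * V z \<partial>\<kappa> v) = (\<integral>z. 1 \<partial>\<kappa> v) + (\<integral>z. \<beta> * V z \<partial>\<kappa> v)"
        by (rule Bochner_Integration.integral_add) (use iV in auto)
      also have "\<dots> = 1 + \<beta> * (\<integral>z. V z \<partial>\<kappa> v)"
        using prob_space by simp
      finally show ?thesis .
    qed
    have "(\<integral>z. w z \<partial>\<kappa> v) \<le> B * (1 + \<beta> * (\<gamma> * V v + K))"
    proof -
      have "\<beta> * (\<integral>z. V z \<partial>\<kappa> v) \<le> \<beta> * (\<gamma> * V v + K)"
        using IV b0 by (simp add: mult_left_mono)
      then show ?thesis unfolding Iw using B0 by (simp add: mult_left_mono)
    qed
    moreover have "(\<integral>z. \<phi> z \<partial>\<kappa> v) = (\<integral>z. u z \<partial>\<kappa> v) + c"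
    proof -
      have "(\<integral>z. u z \<partial>\<kappa> v) = (\<integral>z. \<phi> z \<partial>\<kappa> v) - (\<integral>z. c \<partial>\<kappa> v)"
        unfolding u_def by (rule Bochner_Integration.integral_diff) (use iphi in auto)
      then show ?thesis using prob_space by simp
    qed
    ultimately show ?thesis using iV iu iw iphi by blast
  qed
  have key: "(\<integral>z. u z \<partial>\<kappa> x1) - (\<integral>z. u z \<partial>\<kappa> y1) \<le> (\<integral>z. w z \<partial>\<kappa> x1) + (\<integral>z. w z \<partial>\<kappa> y1) - 2 * \<epsilon> * B"
    if x1: "x1 \<in> space S" and y1: "y1 \<in> space S" and R1: "V x1 + V y1 \<le> R" for x1 y1
  proof -
    have sx: "space (\<kappa> x1) = space S" using ks[OF x1] sets_eq_imp_space_eq by blast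
    have sy: "space (\<kappa> y1) = space S" using ks[OF y1] sets_eq_imp_space_eq by blast
    have ix: "integrable (\<kappa> x1) (\<lambda>z. w z - u z)" using facts[OF x1] by auto
    have iy: "integrable (\<kappa> y1) (\<lambda>z. w z + u z)" using facts[OF y1] by auto
    have D: "ennreal (\<epsilon> * (2 * B)) \<le> (\<integral>\<^sup>+z. (w z - u z) \<partial>\<kappa> x1) + (\<integral>\<^sup>+z. (w z + u z) \<partial>\<kappa> y1)"
    proof (rule doeb[OF x1 y1 R1])
      show "(\<lambda>z. w z - u z) \<in> borel_measurable S" by measurable
      show "(\<lambda>z. w z + u z) \<in> borel_measurable S" by measurable
      show "0 \<le> 2 * B" using B0 by simp
      show "\<forall>z\<in>space S. 0 \<le> w z - u z \<and> 0 \<le> w z + u z \<and> 2 * B \<le> w z - u z + (w z + u z)"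
      proof
        fix z assume z: "z \<in> space S"
        show "0 \<le> w z - u z \<and> 0 \<le> w z + u z \<and> 2 * B \<le> w z - u z + (w z + u z)"
          using uw[OF z] wB[OF z] by (simp add: abs_le_iff)
      qed
    qed
    have ax: "AE z in \<kappa> x1. 0 \<le> w z - u z"
    proof (rule AE_I2)
      fix z assume "z \<in> space (\<kappa> x1)" then have "\<bar>u z\<bar> \<le> w z" using uw sx by simp
      then show "0 \<le> w z - u z" by (simp add: abs_le_iff)
    qed
    have ay: "AE z in \<kappa> y1. 0 \<le> w z + u z"
    proof (rule AE_I2)
      fix z assume "z \<in> space (\<kappa> y1)" then have "\<bar>u z\<bar> \<le> w z" using uw sy by simp
      then show "0 \<le> w z + u z" by (simp add: abs_le_iff)
    qed
    have "(\<integral>\<^sup>+z. (w z - u z) \<partial>\<kappa> x1) = ennreal (\<integral>z. (w z - u z) \<partial>\<kappa> x1)"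
      by (rule nn_integral_eq_integral[OF ix ax])
    moreover have "(\<integral>\<^sup>+z. (w z + u z) \<partial>\<kappa> y1) = ennreal (\<integral>z. (w z + u z) \<partial>\<kappa> y1)"
      by (rule nn_integral_eq_integral[OF iy ay])
    moreover have n1: "0 \<le> (\<integral>z. (w z - u z) \<partial>\<kappa> x1)" by (rule integral_nonneg_AE[OF ax])
    moreover have n2: "0 \<le> (\<integral>z. (w z + u z) \<partial>\<kappa> y1)" by (rule integral_nonneg_AE[OF ay])
    ultimately have "ennreal (\<epsilon> * (2 * B)) \<le> ennreal ((\<integral>z. (w z - u z) \<partial>\<kappa> x1) + (\<integral>z. (w z + u z) \<partial>\<kappa> y1))"
      using D by (simp add: ennreal_plus)
    moreover have "0 \<le> (\<integral>z. (w z - u z) \<partial>\<kappa> x1) + (\<integral>z. (w z + u z) \<partial>\<kappa> y1)"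
      using n1 n2 by simp
    ultimately have "\<epsilon> * (2 * B) \<le> (\<integral>z. (w z - u z) \<partial>\<kappa> x1) + (\<integral>z. (w z + u z) \<partial>\<kappa> y1)"
      by (simp add: ennreal_le_iff)
    also have "\<dots> = (\<integral>z. w z \<partial>\<kappa> x1) - (\<integral>z. u z \<partial>\<kappa> x1) + (\<integral>z. w z \<partial>\<kappa> y1) + (\<integral>z. u z \<partial>\<kappa> y1)"
      using facts[OF x1] facts[OF y1] by simp
    finally show ?thesis by simp
  qed
  have fx: "(\<integral>z. w z \<partial>\<kappa> x) \<le> B * (1 + \<beta> * (\<gamma> * V x + K))" using facts[OF x] by simp
  have fy: "(\<integral>z. w z \<partial>\<kappa> y) \<le> B * (1 + \<beta> * (\<gamma> * V y + K))" using facts[OF y] by simp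
  have diff: "(\<integral>z. \<phi> z \<partial>\<kappa> x) - (\<integral>z. \<phi> z \<partial>\<kappa> y) = (\<integral>z. u z \<partial>\<kappa> x) - (\<integral>z. u z \<partial>\<kappa> y)"
    using facts[OF x] facts[OF y] by simp
  define Sx where "Sx = V x + V y"
  have Sx0: "0 \<le> Sx" using V0[OF x] V0[OF y] by (simp add: Sx_def)
  have bound: "\<bar>(\<integral>z. u z \<partial>\<kappa> x) - (\<integral>z. u z \<partial>\<kappa> y)\<bar> \<le> \<rho> * B * (2 + \<beta> * Sx)"
  proof (cases "Sx \<le> R")
    case True
    have k1: "(\<integral>z. u z \<partial>\<kappa> x) - (\<integral>z. u z \<partial>\<kappa> y) \<le> (\<integral>z. w z \<partial>\<kappa> x) + (\<integral>z. w z \<partial>\<kappa> y) - 2 * \<epsilon> * B"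
      using key[OF x y] True by (simp add: Sx_def)
    have k2: "(\<integral>z. u z \<partial>\<kappa> y) - (\<integral>z. u z \<partial>\<kappa> x) \<le> (\<integral>z. w z \<partial>\<kappa> y) + (\<integral>z. w z \<partial>\<kappa> x) - 2 * \<epsilon> * B"
      using key[OF y x] True by (simp add: Sx_def add.commute)
    have "(\<integral>z. w z \<partial>\<kappa> x) + (\<integral>z. w z \<partial>\<kappa> y) - 2 * \<epsilon> * B \<le> B * (2 - 2 * \<epsilon> + \<beta> * \<gamma> * Sx + 2 * \<beta> * K)"
      using fx fy by (simp add: Sx_def algebra_simps)
    also have "\<dots> \<le> B * (2 - \<epsilon> + \<beta> * \<gamma> * Sx)"
      using bK B0 by (intro mult_left_mono) auto
    also have "\<dots> \<le> B * (\<rho> * (2 + \<beta> * Sx))"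
    proof (intro mult_left_mono[OF _ B0])
      have "\<beta> * \<gamma> * Sx \<le> \<beta> * \<rho> * Sx"
        using gg \<rho>3 b0 Sx0 by (intro mult_right_mono mult_left_mono) auto
      then show "2 - \<epsilon> + \<beta> * \<gamma> * Sx \<le> \<rho> * (2 + \<beta> * Sx)" using \<rho>2 by (simp add: algebra_simps)
    qed
    finally show ?thesis using k1 k2 by (simp add: abs_le_iff algebra_simps)
  next
    case False
    have ax: "\<bar>\<integral>z. u z \<partial>\<kappa> v\<bar> \<le> (\<integral>z. w z \<partial>\<kappa> v)" if v: "v \<in> space S" for v
    proof -
      have sv: "space (\<kappa> v) = space S" using ks[OF v] sets_eq_imp_space_eq by blast
      have "\<bar>\<integral>z. u z \<partial>\<kappa> v\<bar> \<le> (\<integral>z. \<bar>u z\<bar> \<partial>\<kappa> v)" by (rule integral_abs_bound)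
      also have "\<dots> \<le> (\<integral>z. w z \<partial>\<kappa> v)"
        using facts[OF v] uw sv by (intro integral_mono) auto
      finally show ?thesis .
    qed
    have "\<bar>(\<integral>z. u z \<partial>\<kappa> x) - (\<integral>z. u z \<partial>\<kappa> y)\<bar> \<le> (\<integral>z. w z \<partial>\<kappa> x) + (\<integral>z. w z \<partial>\<kappa> y)"
      using ax[OF x] ax[OF y] by simp
    also have "\<dots> \<le> B * (2 + \<beta> * \<gamma> * Sx + 2 * \<beta> * K)"
      using fx fy by (simp add: Sx_def algebra_simps)
    also have "\<dots> \<le> B * (2 + \<beta> * \<gamma>0 * Sx)"
    proof (intro mult_left_mono[OF _ B0])
      have "2 * K \<le> (\<gamma>0 - \<gamma>) * Sx"
        using KR False gg by (meson diff_ge_0_iff_ge linorder_not_le mult_left_mono order.trans less_imp_le)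
      then have "\<beta> * (2 * K) \<le> \<beta> * ((\<gamma>0 - \<gamma>) * Sx)" using b0 by simp
      then show "2 + \<beta> * \<gamma> * Sx + 2 * \<beta> * K \<le> 2 + \<beta> * \<gamma>0 * Sx" by (simp add: algebra_simps)
    qed
    also have "\<dots> \<le> B * (\<rho> * (2 + \<beta> * Sx))"
    proof (intro mult_left_mono[OF _ B0])
      have pos: "0 < 2 + \<beta> * R" "0 < 2 + \<beta> * Sx" using b0 R0 Sx0 by (auto intro: add_pos_nonneg)
      have "(2 + \<beta> * \<gamma>0 * Sx) * (2 + \<beta> * R) \<le> (2 + \<beta> * \<gamma>0 * R) * (2 + \<beta> * Sx)"
      proof -
        have "0 \<le> 2 * \<beta> * (1 - \<gamma>0) * (Sx - R)" using False b0 g01 by auto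
        then show ?thesis by (simp add: algebra_simps)
      qed
      then have "(2 + \<beta> * \<gamma>0 * Sx) \<le> (2 + \<beta> * \<gamma>0 * R) / (2 + \<beta> * R) * (2 + \<beta> * Sx)"
        using pos by (simp add: field_simps)
      also have "\<dots> \<le> \<rho> * (2 + \<beta> * Sx)" using \<rho>1 pos by (intro mult_right_mono) auto
      finally show "2 + \<beta> * \<gamma>0 * Sx \<le> \<rho> * (2 + \<beta> * Sx)" .
    qed
    finally show ?thesis by (simp add: algebra_simps)
  qed
  show ?thesis using bound diff facts[OF x] by (simp add: Sx_def algebra_simps)
qed



locale arch_drift = arch +
  fixes c :: "nat \<Rightarrow> real" and r K :: real
  assumes p1: "p \<ge> 1"
    and c_nonneg: "\<And>i. i < p \<Longrightarrow> c i \<ge> 0"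
    and c_sum: "(\<Sum>i<p. c i) < 1"
    and r_pos: "r > 0"
    and drift: "\<And>x. x \<in> space (stateM p) \<Longrightarrow>
       (\<integral>\<^sup>+ y. ennreal (\<bar>y 0\<bar> powr r) \<partial>ar_step p a b f x)
         \<le> ennreal (K + (\<Sum>i<p. c i * \<bar>x i\<bar> powr r))"
begin

definition "\<eta> = (1 - (\<Sum>i<p. c i)) / real p"
definition "d i = (\<Sum>j\<in>{i..<p}. c j) + real (p - i) * \<eta>"
definition "V x = 1 + (\<Sum>i<p. d i * \<bar>x i\<bar> powr r)"

lemma eta_pos: "\<eta> > 0"
  using c_sum p1 by (simp add: \<eta>_def)

lemma eta_le1: "\<eta> \<le> 1"
proof -
  have "0 \<le> (\<Sum>i<p. c i)" using c_nonneg by (intro sum_nonneg) auto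
  then have "1 - (\<Sum>i<p. c i) \<le> 1" by simp
  also have "1 \<le> real p" using p1 by simp
  finally show ?thesis unfolding \<eta>_def using p1 by (simp add: divide_le_eq)
qed

lemma d0: "d 0 = 1"
  using p1 by (simp add: d_def \<eta>_def atLeast0LessThan)

lemma dp: "d p = 0"
  by (simp add: d_def)

lemma d_succ: "i < p \<Longrightarrow> d (Suc i) + c i = d i - \<eta>"
proof -
  assume i: "i < p"
  have "(\<Sum>j\<in>{i..<p}. c j) = c i + (\<Sum>j\<in>{Suc i..<p}. c j)"
    using i by (simp add: sum.atLeast_Suc_lessThan)
  moreover have "real (p - i) = real (p - Suc i) + 1" using i by simp
  ultimately show ?thesis by (simp add: d_def algebra_simps)
qed

lemma d_pos: "i < p \<Longrightarrow> d i > 0"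
proof -
  assume i: "i < p"
  have "0 \<le> (\<Sum>j\<in>{i..<p}. c j)" using c_nonneg by (intro sum_nonneg) auto
  moreover have "0 < real (p - i) * \<eta>" using i eta_pos by simp
  ultimately show ?thesis unfolding d_def by linarith
qed

lemma d_nonneg: "d i \<ge> 0"
proof (cases "i < p")
  case True then show ?thesis using d_pos by (simp add: less_imp_le)
next
  case False then show ?thesis by (simp add: d_def)
qed

lemma d_le1: "d i \<le> 1"
proof -
  have "(\<Sum>j\<in>{i..<p}. c j) \<le> (\<Sum>j<p. c j)"
    using c_nonneg by (intro sum_mono2) auto
  moreover have "real (p - i) * \<eta> \<le> real p * \<eta>" using eta_pos by (intro mult_right_mono) auto
  moreover have "(\<Sum>j<p. c j) + real p * \<eta> = 1" using p1 by (simp add: \<eta>_def)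
  ultimately show ?thesis by (simp add: d_def)
qed

lemma V_meas[measurable]: "V \<in> borel_measurable S"
proof -
  have "(\<lambda>x. 1 + (\<Sum>i<p. d i * \<bar>x i\<bar> powr r)) \<in> borel_measurable S"
    unfolding stateM_def by measurable
  then show ?thesis by (simp add: V_def[abs_def])
qed

lemma V_ge1: "V x \<ge> 1"
  unfolding V_def using d_nonneg by (simp add: sum_nonneg)

lemma V_shift: "V (shift_in p x z) = 1 + \<bar>z\<bar> powr r + (\<Sum>i<p. d (Suc i) * \<bar>x i\<bar> powr r)"
proof -
  obtain q where q: "p = Suc q" using p1 by (cases p) auto
  have "(\<Sum>i<p. d i * \<bar>shift_in p x z i\<bar> powr r) = d 0 * \<bar>z\<bar> powr r + (\<Sum>i<q. d (Suc i) * \<bar>x i\<bar> powr r)"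
    unfolding q by (subst sum.lessThan_Suc_shift) (simp add: shift_in_def q)
  also have "(\<Sum>i<q. d (Suc i) * \<bar>x i\<bar> powr r) = (\<Sum>i<p. d (Suc i) * \<bar>x i\<bar> powr r)"
    using dp q by simp
  finally show ?thesis unfolding V_def d0 by simp
qed

definition "\<gamma> = 1 - \<eta>"
definition "L = \<eta> + max K 0"

lemma gamma_bounds: "0 \<le> \<gamma>" "\<gamma> < 1"
  using eta_pos eta_le1 by (auto simp: \<gamma>_def)

lemma L_nonneg: "L \<ge> 0" using eta_pos by (simp add: L_def)

lemma PV: assumes x: "x \<in> space S"
  shows "(\<integral>\<^sup>+y. ennreal (V y) \<partial>P x) \<le> ennreal (\<gamma> * V x + L)"
proof -
  define C where "C = 1 + (\<Sum>i<p. d (Suc i) * \<bar>x i\<bar> powr r)"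
  have C0: "C \<ge> 0" unfolding C_def using d_nonneg by (simp add: sum_nonneg)
  have g1: "(\<lambda>y. ennreal (V y)) \<in> borel_measurable S" by measurable
  have p0: "0 \<in> {..<p}" using p1 by auto
  have g3: "(\<lambda>y. ennreal (\<bar>y 0\<bar> powr r)) \<in> borel_measurable S"
    unfolding stateM_def by (intro measurable_compose[OF _ measurable_ennreal] powr_real_measurable
         borel_measurable_abs measurable_component_singleton[OF p0] measurable_const) auto
  have g2: "(\<lambda>y. ennreal (C + \<bar>y 0\<bar> powr r)) \<in> borel_measurable S"
    unfolding stateM_def by (intro measurable_compose[OF _ measurable_ennreal] borel_measurable_add powr_real_measurable
         borel_measurable_abs measurable_component_singleton[OF p0] measurable_const) auto
  interpret Px: prob_space "P x" using prob_P[OF x] .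
  have "(\<integral>\<^sup>+y. ennreal (V y) \<partial>P x) = (\<integral>\<^sup>+y. ennreal (C + \<bar>y 0\<bar> powr r) \<partial>P x)"
    unfolding nn_P[OF g1 x] nn_P[OF g2 x] using p1
    by (intro nn_integral_cong, subst V_shift) (simp add: C_def shift_in_def algebra_simps)
  also have "\<dots> = (\<integral>\<^sup>+y. ennreal C + ennreal (\<bar>y 0\<bar> powr r) \<partial>P x)"
    using C0 by (intro nn_integral_cong) (simp add: ennreal_plus)
  also have "\<dots> = ennreal C + (\<integral>\<^sup>+y. ennreal (\<bar>y 0\<bar> powr r) \<partial>P x)"
    using g3 sets_P[OF x] by (subst nn_integral_add) (auto simp: Px.emeasure_space_1 cong: measurable_cong_sets)
  also have "\<dots> \<le> ennreal C + ennreal (max K 0 + (\<Sum>i<p. c i * \<bar>x i\<bar> powr r))"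
  proof (intro add_left_mono order_trans[OF drift[OF x]] ennreal_leI)
    show "K + (\<Sum>i<p. c i * \<bar>x i\<bar> powr r) \<le> max K 0 + (\<Sum>i<p. c i * \<bar>x i\<bar> powr r)" by simp
  qed
  also have "\<dots> = ennreal (C + max K 0 + (\<Sum>i<p. c i * \<bar>x i\<bar> powr r))"
    using C0 c_nonneg by (subst ennreal_plus[symmetric]) (auto intro!: add_nonneg_nonneg sum_nonneg simp: add.assoc)
  also have "\<dots> \<le> ennreal (\<gamma> * V x + L)"
  proof (intro ennreal_leI)
    have "(\<Sum>i<p. d (Suc i) * \<bar>x i\<bar> powr r) + (\<Sum>i<p. c i * \<bar>x i\<bar> powr r)
        = (\<Sum>i<p. (d (Suc i) + c i) * \<bar>x i\<bar> powr r)" by (simp add: sum.distrib algebra_simps)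
    also have "\<dots> \<le> (\<Sum>i<p. \<gamma> * (d i * \<bar>x i\<bar> powr r))"
    proof (intro sum_mono)
      fix i assume "i \<in> {..<p}"
      then have "d (Suc i) + c i = d i - \<eta>" using d_succ by simp
      also have "\<dots> \<le> \<gamma> * d i" using d_le1[of i] eta_pos by (simp add: \<gamma>_def algebra_simps mult_left_le)
      finally show "(d (Suc i) + c i) * \<bar>x i\<bar> powr r \<le> \<gamma> * (d i * \<bar>x i\<bar> powr r)"
        by (simp add: mult_right_mono mult.assoc[symmetric])
    qed
    also have "\<dots> = \<gamma> * (\<Sum>i<p. d i * \<bar>x i\<bar> powr r)" by (simp add: sum_distrib_left)
    finally have "(\<Sum>i<p. d (Suc i) * \<bar>x i\<bar> powr r) + (\<Sum>i<p. c i * \<bar>x i\<bar> powr r) \<le> \<gamma> * (\<Sum>i<p. d i * \<bar>x i\<bar> powr r)" .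
    then show "C + max K 0 + (\<Sum>i<p. c i * \<bar>x i\<bar> powr r) \<le> \<gamma> * V x + L"
      unfolding C_def V_def L_def \<gamma>_def by (simp add: algebra_simps)
  qed
  finally show ?thesis .
qed

end


context arch_drift
begin

definition "L' = L / (1 - \<gamma>)"

lemma L'_nonneg: "L' \<ge> 0" using L_nonneg gamma_bounds by (simp add: L'_def)

lemma PVn: assumes x: "x \<in> space S"
  shows "(\<integral>\<^sup>+y. ennreal (V y) \<partial>Pn n x) \<le> ennreal (\<gamma> ^ n * V x + L')"
proof (induction n)
  case 0
  have "(\<integral>\<^sup>+y. ennreal (V y) \<partial>Pn 0 x) = ennreal (V x)"
    using x by (simp add: nn_integral_return)
  then show ?case using L'_nonneg by (simp add: ennreal_leI)
next
  case (Suc n)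
  interpret Pnx: prob_space "Pn n x" using prob_Pn[OF x] .
  have mV: "(\<lambda>y. ennreal (V y)) \<in> borel_measurable (Pn n x)"
    by (rule meas_Pn_cong[OF x]) measurable
  have sp: "space (Pn n x) = space S" using space_Pn[OF x] .
  have "(\<integral>\<^sup>+y. ennreal (V y) \<partial>Pn (Suc n) x) = (\<integral>\<^sup>+y. (\<integral>\<^sup>+z. ennreal (V z) \<partial>P y) \<partial>Pn n x)"
    by (rule nn_Pn_Suc[OF _ x]) measurable
  also have "\<dots> \<le> (\<integral>\<^sup>+y. ennreal \<gamma> * ennreal (V y) + ennreal L \<partial>Pn n x)"
  proof (rule nn_integral_mono)
    fix y assume "y \<in> space (Pn n x)"
    then have y: "y \<in> space S" using sp by simp
    have "ennreal (\<gamma> * V y + L) = ennreal \<gamma> * ennreal (V y) + ennreal L"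
      using gamma_bounds L_nonneg V_ge1[of y] by (simp add: ennreal_plus ennreal_mult)
    then show "(\<integral>\<^sup>+z. ennreal (V z) \<partial>P y) \<le> ennreal \<gamma> * ennreal (V y) + ennreal L"
      using PV[OF y] by simp
  qed
  also have "\<dots> = ennreal \<gamma> * (\<integral>\<^sup>+y. ennreal (V y) \<partial>Pn n x) + ennreal L"
  proof -
    have "(\<integral>\<^sup>+y. ennreal \<gamma> * ennreal (V y) + ennreal L \<partial>Pn n x)
        = (\<integral>\<^sup>+y. ennreal \<gamma> * ennreal (V y) \<partial>Pn n x) + (\<integral>\<^sup>+y. ennreal L \<partial>Pn n x)"
      by (rule nn_integral_add) (use mV in auto)
    also have "(\<integral>\<^sup>+y. ennreal \<gamma> * ennreal (V y) \<partial>Pn n x) = ennreal \<gamma> * (\<integral>\<^sup>+y. ennreal (V y) \<partial>Pn n x)"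
      by (rule nn_integral_cmult[OF mV])
    also have "(\<integral>\<^sup>+y. ennreal L \<partial>Pn n x) = ennreal L"
      by (simp add: Pnx.emeasure_space_1)
    finally show ?thesis .
  qed
  also have "\<dots> \<le> ennreal \<gamma> * ennreal (\<gamma> ^ n * V x + L') + ennreal L"
    by (intro add_right_mono mult_left_mono Suc.IH) auto
  also have "\<dots> = ennreal (\<gamma> * (\<gamma> ^ n * V x + L') + L)"
    using gamma_bounds L_nonneg L'_nonneg V_ge1[of x] by (simp add: ennreal_plus ennreal_mult)
  also have "\<gamma> * (\<gamma> ^ n * V x + L') + L = \<gamma> ^ Suc n * V x + L'"
  proof -
    have "1 - \<gamma> \<noteq> 0" using gamma_bounds by simp
    then have "\<gamma> * L' + L = L'" unfolding L'_def by (simp add: field_simps)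
    then show ?thesis by (simp add: algebra_simps)
  qed
  finally show ?case .
qed

lemma PVn': assumes x: "x \<in> space S"
  shows "(\<integral>\<^sup>+y. ennreal (V y) \<partial>Pn n x) \<le> ennreal (V x + L')"
proof -
  have "\<gamma> ^ n \<le> 1" using gamma_bounds by (simp add: power_le_one)
  then have "\<gamma> ^ n * V x \<le> V x" using V_ge1[of x] by (simp add: mult_left_le_one_le)
  then have "ennreal (\<gamma> ^ n * V x + L') \<le> ennreal (V x + L')" by (intro ennreal_leI) simp
  then show ?thesis using PVn[OF x, of n] by (rule order_trans[rotated])
qed

end



definition U :: "real \<Rightarrow> real measure" where "U l = restrict_space lborel {-l..l}"

lemma sets_U: "sets (U l) = sets (restrict_space borel {-l..l})"
  unfolding U_def by (simp add: sets_restrict_space)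

lemma space_U: "space (U l) = {-l..l}"
  unfolding U_def by (simp add: space_restrict_space)

lemma finite_U: "finite_measure (U l)"
proof -
  have "emeasure (U l) (space (U l)) = emeasure lborel {-l..l}"
    unfolding U_def by (simp add: emeasure_restrict_space space_restrict_space)
  then show ?thesis by (intro finite_measureI) (simp add: emeasure_lborel_Icc_eq)
qed

lemma sfin_U: "sigma_finite_measure (U l)"
  using finite_U finite_measure.axioms(1) by blast

lemma prod_U: "product_sigma_finite (\<lambda>_. U l)"
  unfolding product_sigma_finite_def using sfin_U by blast

lemma U_comp_meas: "(\<lambda>w. w) \<in> U l \<rightarrow>\<^sub>M borel"
  unfolding U_def by (intro measurable_restrict_space1) simp

lemma nn_U: "(\<integral>\<^sup>+w. g w \<partial>U l) = (\<integral>\<^sup>+w. g w * indicator {-l..l} w \<partial>lborel)"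
  unfolding U_def by (rule nn_integral_restrict_space) simp

lemma emeasure_U: "l \<ge> 0 \<Longrightarrow> emeasure (U l) (space (U l)) = ennreal (2 * l)"
  unfolding U_def by (simp add: emeasure_restrict_space space_restrict_space emeasure_lborel_Icc_eq)

lemma shift_meas_gen[measurable]:
  assumes F[measurable]: "F \<in> M \<rightarrow>\<^sub>M stateM p" and G[measurable]: "G \<in> borel_measurable M"
  shows "(\<lambda>m. shift_in p (F m) (G m)) \<in> M \<rightarrow>\<^sub>M stateM p"
proof -
  have "(\<lambda>m. \<lambda>i\<in>{..<p}. if i = 0 then G m else F m (i - 1)) \<in> M \<rightarrow>\<^sub>M stateM p"
    unfolding stateM_def
  proof (rule measurable_restrict)
    fix i assume i: "i \<in> {..<p}"
    show "(\<lambda>m. if i = 0 then G m else F m (i - 1)) \<in> borel_measurable M"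
    proof (cases "i = 0")
      case True then show ?thesis by simp
    next
      case False
      then have i1: "i - 1 \<in> {..<p}" using i by auto
      have "(\<lambda>m. F m (i - 1)) \<in> borel_measurable M"
        using measurable_compose[OF F[unfolded stateM_def] measurable_component_singleton[OF i1]] .
      then show ?thesis using False by simp
    qed
  qed
  then show ?thesis by (simp add: shift_in_def)
qed

locale arch_full = arch_drift +
  assumes f_loc_pos: "\<And>R. \<exists>\<delta>>0. \<forall>u. \<bar>u\<bar> \<le> R \<longrightarrow> \<delta> \<le> f u"
    and b_pos: "\<And>x. x \<in> space (stateM p) \<Longrightarrow> b x > 0"
    and b_loc: "\<And>R. \<exists>\<delta>>0. \<exists>M. \<forall>x\<in>space (stateM p).
                   pnorm p x \<le> R \<longrightarrow> \<delta> \<le> b x \<and> b x \<le> M"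
    and lin_growth: "\<exists>C. \<forall>x\<in>space (stateM p).
                   \<bar>a x\<bar> \<le> C * (1 + pnorm p x) \<and> \<bar>b x\<bar> \<le> C * (1 + pnorm p x)"
begin

definition "Bx l x \<longleftrightarrow> (\<forall>i<p. \<bar>x i\<bar> \<le> l)"

lemma pnorm_box: assumes "Bx l x" shows "pnorm p x \<le> sqrt (real p * l\<^sup>2)"
proof -
  have "(\<Sum>i<p. (x i)\<^sup>2) \<le> (\<Sum>i<p. l\<^sup>2)"
  proof (intro sum_mono)
    fix i assume "i \<in> {..<p}"
    then have "\<bar>x i\<bar> \<le> l" using assms by (auto simp: Bx_def)
    then show "(x i)\<^sup>2 \<le> l\<^sup>2" by (metis abs_ge_zero order_trans power2_abs power_mono)
  qed
  then show ?thesis unfolding pnorm_def by simp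
qed

lemma one_step:
  assumes l: "0 < l"
  shows "\<exists>\<alpha>>0. \<forall>y\<in>space S. Bx l y \<longrightarrow> (\<forall>h\<in>borel_measurable S.
            ennreal \<alpha> * (\<integral>\<^sup>+w. h (shift_in p y w) \<partial>U l) \<le> (\<integral>\<^sup>+z. h z \<partial>P y))"
proof -
  define R0 where "R0 = sqrt (real p * l\<^sup>2)"
  have R00: "R0 \<ge> 0" unfolding R0_def by simp
  obtain \<delta>b Mb where \<delta>b: "\<delta>b > 0" and bb: "\<forall>x\<in>space S. pnorm p x \<le> R0 \<longrightarrow> \<delta>b \<le> b x \<and> b x \<le> Mb"
    using b_loc[of R0] by blast
  obtain C where C: "\<forall>x\<in>space S. \<bar>a x\<bar> \<le> C * (1 + pnorm p x)"
    using lin_growth by blast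
  define A where "A = \<bar>C\<bar> * (1 + R0)"
  have A0: "A \<ge> 0" using R00 by (simp add: A_def)
  define Ru where "Ru = (l + A) / \<delta>b"
  obtain \<delta>f where \<delta>f: "\<delta>f > 0" and ff: "\<forall>u. \<bar>u\<bar> \<le> Ru \<longrightarrow> \<delta>f \<le> f u"
    using f_loc_pos[of Ru] by blast
  define Mb' where "Mb' = max Mb 1"
  define \<alpha> where "\<alpha> = \<delta>f / Mb'"
  have Mb'0: "Mb' > 0" by (simp add: Mb'_def)
  have \<alpha>0: "\<alpha> > 0" using \<delta>f Mb'0 by (simp add: \<alpha>_def)
  have main: "ennreal \<alpha> * (\<integral>\<^sup>+w. h (shift_in p y w) \<partial>U l) \<le> (\<integral>\<^sup>+z. h z \<partial>P y)"
    if y: "y \<in> space S" and By: "Bx l y" and h[measurable]: "h \<in> borel_measurable S" for y h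
  proof -
    have pn: "pnorm p y \<le> R0" using pnorm_box[OF By] by (simp add: R0_def)
    have by1: "\<delta>b \<le> b y" "b y \<le> Mb" using bb y pn by auto
    have bpos: "b y > 0" using by1 \<delta>b by simp
    have ay: "\<bar>a y\<bar> \<le> A"
    proof -
      have "\<bar>a y\<bar> \<le> C * (1 + pnorm p y)" using C y by auto
      also have "\<dots> \<le> \<bar>C\<bar> * (1 + pnorm p y)"
      proof (intro mult_right_mono)
        have "0 \<le> pnorm p y" unfolding pnorm_def by (intro real_sqrt_ge_zero sum_nonneg) auto
        then show "0 \<le> 1 + pnorm p y" by simp
      qed simp
      also have "\<dots> \<le> \<bar>C\<bar> * (1 + R0)" using pn by (intro mult_left_mono) auto
      finally show ?thesis by (simp add: A_def)
    qed
    have ys: "y \<in> space S" using y .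
    have mg: "(\<lambda>w. h (shift_in p y w) * indicator {-l..l} w) \<in> borel_measurable borel"
      using ys by measurable
    have "(\<integral>\<^sup>+w. h (shift_in p y w) \<partial>U l) = (\<integral>\<^sup>+w. h (shift_in p y w) * indicator {-l..l} w \<partial>lborel)"
      by (rule nn_U)
    also have "\<dots> = ennreal \<bar>b y\<bar> * (\<integral>\<^sup>+u. h (shift_in p y (a y + b y * u)) * indicator {-l..l} (a y + b y * u) \<partial>lborel)"
      by (rule nn_integral_real_affine[OF mg]) (use bpos in simp)
    finally have "ennreal \<alpha> * (\<integral>\<^sup>+w. h (shift_in p y w) \<partial>U l) =
        ennreal \<alpha> * (ennreal \<bar>b y\<bar> * (\<integral>\<^sup>+u. h (shift_in p y (a y + b y * u)) * indicator {-l..l} (a y + b y * u) \<partial>lborel))"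
      by simp
    also have "\<dots> = (\<integral>\<^sup>+u. ennreal (\<alpha> * b y) * (h (shift_in p y (a y + b y * u)) * indicator {-l..l} (a y + b y * u)) \<partial>lborel)"
    proof -
      have mm: "(\<lambda>u. h (shift_in p y (a y + b y * u)) * indicator {-l..l} (a y + b y * u)) \<in> borel_measurable lborel"
        using ys by measurable
      show ?thesis using bpos \<alpha>0
        by (subst nn_integral_cmult[OF mm]) (simp add: ennreal_mult mult.assoc)
    qed
    also have "\<dots> \<le> (\<integral>\<^sup>+u. ennreal (f u) * h (shift_in p y (a y + b y * u)) \<partial>lborel)"
    proof (rule nn_integral_mono)
      fix u :: real
      show "ennreal (\<alpha> * b y) * (h (shift_in p y (a y + b y * u)) * indicator {-l..l} (a y + b y * u))
          \<le> ennreal (f u) * h (shift_in p y (a y + b y * u))"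
      proof (cases "a y + b y * u \<in> {-l..l}")
        case False then show ?thesis by simp
      next
        case True
        have "\<bar>b y * u\<bar> \<le> l + A" using True ay by auto
        then have "b y * \<bar>u\<bar> \<le> l + A" using bpos by (simp add: abs_mult)
        moreover have "\<delta>b * \<bar>u\<bar> \<le> b y * \<bar>u\<bar>" using by1 by (intro mult_right_mono) auto
        ultimately have "\<delta>b * \<bar>u\<bar> \<le> l + A" by linarith
        then have "\<bar>u\<bar> \<le> Ru" unfolding Ru_def using \<delta>b by (simp add: le_divide_eq mult.commute)
        then have fu: "\<delta>f \<le> f u" using ff by blast
        have "\<alpha> * b y \<le> \<alpha> * Mb'" using by1 \<alpha>0 by (intro mult_left_mono) (auto simp: Mb'_def)
        also have "\<dots> = \<delta>f" using Mb'0 by (simp add: \<alpha>_def)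
        finally have "\<alpha> * b y \<le> f u" using fu by linarith
        then have "ennreal (\<alpha> * b y) \<le> ennreal (f u)" by (rule ennreal_leI)
        then show ?thesis using True by (simp add: mult_right_mono)
      qed
    qed
    also have "\<dots> = (\<integral>\<^sup>+z. h z \<partial>P y)" by (rule nn_P[symmetric, OF h y])
    finally show ?thesis .
  qed
  show ?thesis using \<alpha>0 main by blast
qed


definition "newst k x z = (\<lambda>i\<in>{..<p}. if i < k then z (k - 1 - i) else x (i - k))"

lemma new_shift: "shift_in p (newst k x z) w = newst (Suc k) x (z(k := w))"
proof (rule ext)
  fix i show "shift_in p (newst k x z) w i = newst (Suc k) x (z(k := w)) i"
  proof (cases "i < p")
    case True
    show ?thesis
    proof (cases "i = 0")
      case True then show ?thesis using \<open>i < p\<close> by (simp add: shift_in_def newst_def)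
    next
      case False
      then have "i - 1 < p" "(i - 1 < k) = (i < Suc k)" "k - 1 - (i - 1) = k - i" "i - 1 - k = i - Suc k" using True by auto
      moreover have "k - i \<noteq> k" if "i < Suc k" using False that by auto
      ultimately show ?thesis using True False by (simp add: shift_in_def newst_def)
    qed
  qed (simp add: shift_in_def newst_def)
qed

lemma new_box: "Bx l x \<Longrightarrow> (\<forall>j<k. \<bar>z j\<bar> \<le> l) \<Longrightarrow> Bx l (newst k x z)"
  unfolding Bx_def newst_def by auto

lemma new0: "x \<in> space S \<Longrightarrow> newst 0 x z = x"
  unfolding newst_def by (auto simp: space_stateM PiE_def extensional_def fun_eq_iff)

lemma newp: "newst p x z = (\<lambda>i\<in>{..<p}. z (p - 1 - i))"
  unfolding newst_def by (auto simp: fun_eq_iff)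

lemma new_meas: "(\<lambda>z. newst k x z) \<in> PiM {..<k} (\<lambda>_. U l) \<rightarrow>\<^sub>M S"
  unfolding newst_def stateM_def
proof (rule measurable_restrict)
  fix i assume i: "i \<in> {..<p}"
  show "(\<lambda>z. if i < k then z (k - 1 - i) else x (i - k)) \<in> borel_measurable (PiM {..<k} (\<lambda>_. U l))"
  proof (cases "i < k")
    case True
    then have j: "k - 1 - i \<in> {..<k}" by auto
    have "(\<lambda>z. z (k - 1 - i)) \<in> borel_measurable (PiM {..<k} (\<lambda>_. U l))"
      using measurable_compose[OF measurable_component_singleton[OF j] U_comp_meas] .
    then show ?thesis using True by simp
  qed simp
qed

lemma Bx_pred[measurable]: "Measurable.pred S (Bx l)"
proof -
  have "Bx l = (\<lambda>x. \<forall>i\<in>{..<p}. \<bar>x i\<bar> \<le> l)" by (auto simp: Bx_def fun_eq_iff)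
  moreover have "Measurable.pred S (\<lambda>x. \<forall>i\<in>{..<p}. \<bar>x i\<bar> \<le> l)"
    unfolding stateM_def by measurable
  ultimately show ?thesis by simp
qed

lemma multi:
  assumes l: "0 < l" and \<alpha>0: "\<alpha> > 0"
    and os: "\<forall>y\<in>space S. Bx l y \<longrightarrow> (\<forall>h\<in>borel_measurable S.
            ennreal \<alpha> * (\<integral>\<^sup>+w. h (shift_in p y w) \<partial>U l) \<le> (\<integral>\<^sup>+z. h z \<partial>P y))"
    and x: "x \<in> space S" and Bxx: "Bx l x"
  shows "k \<le> p \<Longrightarrow> h \<in> borel_measurable S \<Longrightarrow>
     ennreal (\<alpha> ^ k) * (\<integral>\<^sup>+z. h (newst k x z) \<partial>PiM {..<k} (\<lambda>_. U l)) \<le> (\<integral>\<^sup>+z. h z \<partial>Pn k x)"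
proof (induction k arbitrary: h)
  case 0
  have "(\<integral>\<^sup>+z. h (newst 0 x z) \<partial>PiM {..<0} (\<lambda>_. U l)) = h x"
    by (simp add: PiM_empty new0[OF x] nn_integral_count_space_finite)
  moreover have "(\<integral>\<^sup>+z. h z \<partial>Pn 0 x) = h x"
    using x 0 by (simp add: nn_integral_return)
  ultimately show ?case by simp
next
  case (Suc k)
  interpret sfU: sigma_finite_measure "U l" by (rule sfin_U)
  interpret prU: product_sigma_finite "\<lambda>_. U l" by (rule prod_U)
  note hm[measurable] = Suc.prems(2)
  have kp: "k \<le> p" using Suc.prems by simp
  define H where "H y = (if Bx l y then ennreal \<alpha> * (\<integral>\<^sup>+w. h (shift_in p y w) \<partial>U l) else 0)" for y
  have m2: "(\<lambda>m. snd m) \<in> borel_measurable (S \<Otimes>\<^sub>M U l)"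
    using measurable_compose[OF measurable_snd U_comp_meas] .
  have m3: "(\<lambda>m. h (shift_in p (fst m) (snd m))) \<in> borel_measurable (S \<Otimes>\<^sub>M U l)"
    using m2 by measurable
  have m4: "(\<lambda>y. \<integral>\<^sup>+w. h (shift_in p y w) \<partial>U l) \<in> borel_measurable S"
    by (rule sfU.borel_measurable_nn_integral) (use m3 in \<open>simp add: case_prod_beta'\<close>)
  have Hm: "H \<in> borel_measurable S" unfolding H_def using m4 by measurable
  have HP: "H y \<le> (\<integral>\<^sup>+z. h z \<partial>P y)" if "y \<in> space S" for y
    using os that hm unfolding H_def by auto
  have "ennreal (\<alpha> ^ k) * (\<integral>\<^sup>+z. H (newst k x z) \<partial>PiM {..<k} (\<lambda>_. U l)) \<le> (\<integral>\<^sup>+z. H z \<partial>Pn k x)"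
    by (rule Suc.IH[OF kp Hm])
  also have "\<dots> \<le> (\<integral>\<^sup>+y. (\<integral>\<^sup>+z. h z \<partial>P y) \<partial>Pn k x)"
    by (intro nn_integral_mono) (use HP space_Pn[OF x] in auto)
  also have "\<dots> = (\<integral>\<^sup>+z. h z \<partial>Pn (Suc k) x)"
    by (rule nn_Pn_Suc[symmetric, OF hm x])
  finally have A: "ennreal (\<alpha> ^ k) * (\<integral>\<^sup>+z. H (newst k x z) \<partial>PiM {..<k} (\<lambda>_. U l)) \<le> (\<integral>\<^sup>+z. h z \<partial>Pn (Suc k) x)" .
  have nm: "(\<lambda>z. h (newst (Suc k) x z)) \<in> borel_measurable (PiM {..<Suc k} (\<lambda>_. U l))"
    using measurable_compose[OF new_meas hm] .
  have "(\<integral>\<^sup>+z. ennreal \<alpha> * h (newst (Suc k) x z) \<partial>PiM (insert k {..<k}) (\<lambda>_. U l))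
      = (\<integral>\<^sup>+z. (\<integral>\<^sup>+w. ennreal \<alpha> * h (newst (Suc k) x (z(k := w))) \<partial>U l) \<partial>PiM {..<k} (\<lambda>_. U l))"
    by (rule prU.product_nn_integral_insert) (use nm in \<open>auto simp: lessThan_Suc\<close>)
  also have "\<dots> = (\<integral>\<^sup>+z. H (newst k x z) \<partial>PiM {..<k} (\<lambda>_. U l))"
  proof (rule nn_integral_cong)
    fix z assume z: "z \<in> space (PiM {..<k} (\<lambda>_. U l))"
    then have "\<forall>j<k. \<bar>z j\<bar> \<le> l" by (auto simp: space_PiM space_U PiE_def Pi_def)
    then have B: "Bx l (newst k x z)" using new_box[OF Bxx] by blast
    have ns: "newst k x z \<in> space S"
      using measurable_space[OF new_meas z] .
    have mw: "(\<lambda>w. h (shift_in p (newst k x z) w)) \<in> borel_measurable (U l)"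
      using ns U_comp_meas by measurable
    have "(\<integral>\<^sup>+w. ennreal \<alpha> * h (newst (Suc k) x (z(k := w))) \<partial>U l) = (\<integral>\<^sup>+w. ennreal \<alpha> * h (shift_in p (newst k x z) w) \<partial>U l)"
      by (simp add: new_shift)
    also have "\<dots> = ennreal \<alpha> * (\<integral>\<^sup>+w. h (shift_in p (newst k x z) w) \<partial>U l)"
      by (rule nn_integral_cmult[OF mw])
    finally show "(\<integral>\<^sup>+w. ennreal \<alpha> * h (newst (Suc k) x (z(k := w))) \<partial>U l) = H (newst k x z)"
      using B by (simp add: H_def)
  qed
  finally have B: "(\<integral>\<^sup>+z. ennreal \<alpha> * h (newst (Suc k) x z) \<partial>PiM {..<Suc k} (\<lambda>_. U l)) = (\<integral>\<^sup>+z. H (newst k x z) \<partial>PiM {..<k} (\<lambda>_. U l))"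
    by (simp add: lessThan_Suc)
  have "ennreal (\<alpha> ^ Suc k) * (\<integral>\<^sup>+z. h (newst (Suc k) x z) \<partial>PiM {..<Suc k} (\<lambda>_. U l))
      = ennreal (\<alpha> ^ k) * (\<integral>\<^sup>+z. ennreal \<alpha> * h (newst (Suc k) x z) \<partial>PiM {..<Suc k} (\<lambda>_. U l))"
    using \<alpha>0 by (simp add: nn_integral_cmult[OF nm] ennreal_mult mult.assoc mult.left_commute)
  also have "\<dots> = ennreal (\<alpha> ^ k) * (\<integral>\<^sup>+z. H (newst k x z) \<partial>PiM {..<k} (\<lambda>_. U l))" using B by simp
  finally show ?case using A by simp
qed


lemma d_ge_eta: "i < p \<Longrightarrow> \<eta> \<le> d i"
proof -
  assume i: "i < p"
  have "0 \<le> (\<Sum>j\<in>{i..<p}. c j)" using c_nonneg by (intro sum_nonneg) auto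
  moreover have "\<eta> \<le> real (p - i) * \<eta>" using i eta_pos by (simp add: mult_le_cancel_right1)
  ultimately show ?thesis unfolding d_def by linarith
qed

lemma V_box: assumes "V x \<le> R" shows "Bx ((R / \<eta>) powr (1 / r) + 1) x"
  unfolding Bx_def
proof (intro allI impI)
  fix i assume i: "i < p"
  have "d i * \<bar>x i\<bar> powr r \<le> (\<Sum>j<p. d j * \<bar>x j\<bar> powr r)"
    using i d_nonneg by (intro member_le_sum) auto
  then have "d i * \<bar>x i\<bar> powr r \<le> R" using assms unfolding V_def by simp
  moreover have "\<eta> * \<bar>x i\<bar> powr r \<le> d i * \<bar>x i\<bar> powr r"
    using d_ge_eta[OF i] by (intro mult_right_mono) auto
  ultimately have "\<eta> * \<bar>x i\<bar> powr r \<le> R" by linarith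
  then have xr: "\<bar>x i\<bar> powr r \<le> R / \<eta>" using eta_pos by (simp add: le_divide_eq mult.commute)
  have "\<bar>x i\<bar> = (\<bar>x i\<bar> powr r) powr (1 / r)"
    using r_pos by (simp add: powr_powr)
  also have "\<dots> \<le> (R / \<eta>) powr (1 / r)"
    using xr r_pos by (intro powr_mono2) auto
  finally show "\<bar>x i\<bar> \<le> (R / \<eta>) powr (1 / r) + 1" by simp
qed

lemma doeblin:
  shows "\<exists>\<epsilon>>0. \<forall>x y g h t. x \<in> space S \<longrightarrow> y \<in> space S \<longrightarrow> V x + V y \<le> R \<longrightarrow>
        g \<in> borel_measurable S \<longrightarrow> h \<in> borel_measurable S \<longrightarrow>
        (\<forall>z\<in>space S. 0 \<le> g z \<and> 0 \<le> h z \<and> t \<le> g z + h z) \<longrightarrow> 0 \<le> t \<longrightarrow>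
        ennreal (\<epsilon> * t) \<le> (\<integral>\<^sup>+z. g z \<partial>Pn p x) + (\<integral>\<^sup>+z. h z \<partial>Pn p y)"
proof -
  define l where "l = (R / \<eta>) powr (1 / r) + 1"
  have l0: "l > 0" unfolding l_def by (simp add: add_nonneg_pos)
  obtain \<alpha> where \<alpha>0: "\<alpha> > 0" and os: "\<forall>y\<in>space S. Bx l y \<longrightarrow> (\<forall>h\<in>borel_measurable S.
            ennreal \<alpha> * (\<integral>\<^sup>+w. h (shift_in p y w) \<partial>U l) \<le> (\<integral>\<^sup>+z. h z \<partial>P y))"
    using one_step[OF l0] by blast
  interpret prU: product_sigma_finite "\<lambda>_. U l" by (rule prod_U)
  define rv where "rv z = (\<lambda>i\<in>{..<p}. z (p - 1 - i))" for z :: "nat \<Rightarrow> real"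
  define PP where "PP = PiM {..<p} (\<lambda>_. U l)"
  have rvm: "rv \<in> PP \<rightarrow>\<^sub>M S" using new_meas[of p _ l] unfolding rv_def PP_def newp .
  have low: "ennreal (\<alpha> ^ p) * (\<integral>\<^sup>+z. ennreal (g (rv z)) \<partial>PP) \<le> (\<integral>\<^sup>+z. ennreal (g z) \<partial>Pn p x)"
    if x: "x \<in> space S" and Vx: "V x \<le> R" and gm: "g \<in> borel_measurable S" for x g
  proof -
    have B: "Bx l x" using V_box[OF Vx] unfolding l_def .
    have gm': "(\<lambda>z. ennreal (g z)) \<in> borel_measurable S" using gm by measurable
    show ?thesis using multi[OF l0 \<alpha>0 os x B order_refl gm'] unfolding newp rv_def PP_def .
  qed
  have emP: "emeasure PP (space PP) = ennreal ((2 * l) ^ p)"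
  proof -
    have "space PP = PiE {..<p} (\<lambda>_. space (U l))" unfolding PP_def by (simp add: space_PiM)
    then have "emeasure PP (space PP) = (\<Prod>i<p. emeasure (U l) (space (U l)))"
      unfolding PP_def by (simp add: prU.emeasure_PiM)
    also have "\<dots> = (\<Prod>i<p. ennreal (2 * l))" using l0 by (simp add: emeasure_U)
    finally show ?thesis by (simp add: ennreal_power l0 less_imp_le)
  qed
  define \<epsilon> where "\<epsilon> = \<alpha> ^ p * (2 * l) ^ p"
  have \<epsilon>0: "\<epsilon> > 0" using \<alpha>0 l0 by (simp add: \<epsilon>_def)
  have main: "ennreal (\<epsilon> * t) \<le> (\<integral>\<^sup>+z. g z \<partial>Pn p x) + (\<integral>\<^sup>+z. h z \<partial>Pn p y)"
    if x: "x \<in> space S" and y: "y \<in> space S" and Vxy: "V x + V y \<le> R"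
      and gm[measurable]: "g \<in> borel_measurable S" and hm[measurable]: "h \<in> borel_measurable S"
      and gh: "\<forall>z\<in>space S. 0 \<le> g z \<and> 0 \<le> h z \<and> t \<le> g z + h z" and t0: "0 \<le> t" for x y g h t
  proof -
    have Vx: "V x \<le> R" using Vxy V_ge1[of y] by linarith
    have Vy: "V y \<le> R" using Vxy V_ge1[of x] by linarith
    have gm': "(\<lambda>z. ennreal (g z)) \<in> borel_measurable S" by measurable
    have hm': "(\<lambda>z. ennreal (h z)) \<in> borel_measurable S" by measurable
    have m1: "(\<lambda>z. ennreal (g (rv z))) \<in> borel_measurable PP" using measurable_compose[OF rvm gm'] .
    have m2: "(\<lambda>z. ennreal (h (rv z))) \<in> borel_measurable PP" using measurable_compose[OF rvm hm'] .
    have "ennreal (\<epsilon> * t) = ennreal (\<alpha> ^ p) * (\<integral>\<^sup>+z. ennreal t \<partial>PP)"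
    proof -
      have "(\<integral>\<^sup>+z. ennreal t \<partial>PP) = ennreal t * ennreal ((2 * l) ^ p)"
        using emP by (simp add: nn_integral_const)
      also have "\<dots> = ennreal (t * (2 * l) ^ p)" using t0 l0 by (simp add: ennreal_mult)
      finally have "ennreal (\<alpha> ^ p) * (\<integral>\<^sup>+z. ennreal t \<partial>PP) = ennreal (\<alpha> ^ p * (t * (2 * l) ^ p))"
        using \<alpha>0 t0 l0 by (simp add: ennreal_mult)
      then show ?thesis by (simp add: \<epsilon>_def algebra_simps)
    qed
    also have "\<dots> \<le> ennreal (\<alpha> ^ p) * (\<integral>\<^sup>+z. ennreal (g (rv z)) + ennreal (h (rv z)) \<partial>PP)"
    proof (intro mult_left_mono nn_integral_mono)
      fix z assume "z \<in> space PP"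
      then have "rv z \<in> space S" using measurable_space[OF rvm] by blast
      then show "ennreal t \<le> ennreal (g (rv z)) + ennreal (h (rv z))"
      proof -
        assume rz: "rv z \<in> space S"
        have "ennreal t \<le> ennreal (g (rv z) + h (rv z))" using gh rz by (intro ennreal_leI) auto
        also have "\<dots> = ennreal (g (rv z)) + ennreal (h (rv z))" using gh rz by (intro ennreal_plus) auto
        finally show ?thesis .
      qed
    qed simp
    also have "\<dots> = ennreal (\<alpha> ^ p) * (\<integral>\<^sup>+z. ennreal (g (rv z)) \<partial>PP) + ennreal (\<alpha> ^ p) * (\<integral>\<^sup>+z. ennreal (h (rv z)) \<partial>PP)"
      by (simp add: nn_integral_add[OF m1 m2] distrib_left)
    also have "\<dots> \<le> (\<integral>\<^sup>+z. g z \<partial>Pn p x) + (\<integral>\<^sup>+z. h z \<partial>Pn p y)"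
      using low[OF x Vx gm] low[OF y Vy hm] by (rule add_mono)
    finally show ?thesis .
  qed
  show ?thesis using \<epsilon>0 main by blast
qed

end


context arch_full
begin

lemma int_Pn:
  fixes g :: "(nat \<Rightarrow> real) \<Rightarrow> real"
  assumes x: "x \<in> space S" and g[measurable]: "g \<in> borel_measurable S"
    and gb: "\<forall>y\<in>space S. \<bar>g y\<bar> \<le> C * V y"
  shows "integrable (Pn n x) g"
proof -
  have sp: "space (Pn n x) = space S" using space_Pn[OF x] .
  have gm: "g \<in> borel_measurable (Pn n x)" by (rule meas_Pn_cong[OF x g])
  have C0: "0 \<le> C"
  proof -
    have "0 \<le> C * V x" using gb x by (meson abs_ge_zero order_trans)
    then show ?thesis using V_ge1[of x] by (simp add: zero_le_mult_iff)
  qed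
  have "(\<integral>\<^sup>+y. ennreal (norm (g y)) \<partial>Pn n x) \<le> (\<integral>\<^sup>+y. ennreal C * ennreal (V y) \<partial>Pn n x)"
  proof (rule nn_integral_mono)
    fix y assume "y \<in> space (Pn n x)"
    then have "\<bar>g y\<bar> \<le> C * V y" using gb sp by auto
    then show "ennreal (norm (g y)) \<le> ennreal C * ennreal (V y)"
    proof -
      have "ennreal (norm (g y)) \<le> ennreal (C * V y)" using \<open>\<bar>g y\<bar> \<le> C * V y\<close> by (intro ennreal_leI) simp
      also have "\<dots> = ennreal C * ennreal (V y)" using C0 V_ge1[of y] by (simp add: ennreal_mult)
      finally show ?thesis .
    qed
  qed
  also have "\<dots> = ennreal C * (\<integral>\<^sup>+y. ennreal (V y) \<partial>Pn n x)"
    by (rule nn_integral_cmult) (rule meas_Pn_cong[OF x], measurable)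
  also have "\<dots> \<le> ennreal C * ennreal (V x + L')"
    by (intro mult_left_mono PVn'[OF x]) simp
  also have "\<dots> < \<infinity>" by (simp add: ennreal_mult_less_top)
  finally show ?thesis using gm by (simp add: integrable_iff_bounded)
qed

lemma int_Pn_add:
  fixes g :: "(nat \<Rightarrow> real) \<Rightarrow> real"
  assumes x: "x \<in> space S" and g[measurable]: "g \<in> borel_measurable S"
    and gb: "\<forall>y\<in>space S. \<bar>g y\<bar> \<le> C * V y"
  shows "integrable (Pn m x) (\<lambda>y. \<integral>z. g z \<partial>Pn k y) \<and>
         (\<integral>z. g z \<partial>Pn (m + k) x) = (\<integral>y. (\<integral>z. g z \<partial>Pn k y) \<partial>Pn m x)"
proof -
  have K: "Pn k \<in> Pn m x \<rightarrow>\<^sub>M subprob_algebra S" by (rule meas_Pn_cong[OF x Pn_sub])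
  have iK: "integrable (Pn k y) g" if "y \<in> space (Pn m x)" for y
    using int_Pn[OF _ g gb] that space_Pn[OF x] by auto
  have iB: "integrable (bind (Pn m x) (Pn k)) g"
    using int_Pn[OF x g gb, of "m + k"] Pn_add[OF x] by simp
  show ?thesis using integral_bind_real[OF K g iK iB] Pn_add[OF x] by simp
qed

lemma Pn_integral_meas:
  fixes g :: "(nat \<Rightarrow> real) \<Rightarrow> real"
  assumes g[measurable]: "g \<in> borel_measurable S"
  shows "(\<lambda>y. \<integral>z. g z \<partial>Pn n y) \<in> borel_measurable S"
  using measurable_compose[OF Pn_sub integral_measurable_subprob_algebra[OF g]] .


definition "\<gamma>p = \<gamma> ^ p"
definition "\<gamma>0 = (1 + \<gamma>p) / 2"
definition "Rh = 2 * L' / (\<gamma>0 - \<gamma>p) + 1"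
definition "DB \<epsilon> \<longleftrightarrow> \<epsilon> > 0 \<and> (\<forall>x y g h t. x \<in> space S \<longrightarrow> y \<in> space S \<longrightarrow> V x + V y \<le> Rh \<longrightarrow>
        g \<in> borel_measurable S \<longrightarrow> h \<in> borel_measurable S \<longrightarrow>
        (\<forall>z\<in>space S. 0 \<le> g z \<and> 0 \<le> h z \<and> t \<le> g z + h z) \<longrightarrow> 0 \<le> t \<longrightarrow>
        ennreal (\<epsilon> * t) \<le> (\<integral>\<^sup>+z. g z \<partial>Pn p x) + (\<integral>\<^sup>+z. h z \<partial>Pn p y))"
definition "\<epsilon>h = (SOME \<epsilon>. DB \<epsilon>)"
definition "\<beta> = \<epsilon>h / (2 * L' + 1)"
definition "\<rho> = max ((2 + \<beta> * \<gamma>0 * Rh) / (2 + \<beta> * Rh)) (max (1 - \<epsilon>h / 2) \<gamma>0)"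

lemma DB_eh: "DB \<epsilon>h"
proof -
  have "\<exists>\<epsilon>. DB \<epsilon>" using doeblin[of Rh] unfolding DB_def by blast
  then show ?thesis unfolding \<epsilon>h_def by (rule someI_ex)
qed

lemma eh_pos: "\<epsilon>h > 0" using DB_eh by (simp add: DB_def)

lemma gp_bounds: "0 \<le> \<gamma>p" "\<gamma>p < 1"
proof -
  show "0 \<le> \<gamma>p" using gamma_bounds by (simp add: \<gamma>p_def)
  have "\<gamma> ^ p \<le> \<gamma>" using gamma_bounds p1 by (intro power_decreasing[where n=1, simplified]) auto
  then show "\<gamma>p < 1" using gamma_bounds by (simp add: \<gamma>p_def)
qed

lemma g0_bounds: "\<gamma>p < \<gamma>0" "\<gamma>0 < 1" "0 \<le> \<gamma>0"
  using gp_bounds by (auto simp: \<gamma>0_def)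

lemma Rh_pos: "Rh > 0" and KR: "2 * L' \<le> (\<gamma>0 - \<gamma>p) * Rh"
proof -
  have d: "\<gamma>0 - \<gamma>p > 0" using g0_bounds by simp
  have "0 \<le> 2 * L' / (\<gamma>0 - \<gamma>p)" using d L'_nonneg by simp
  then show "Rh > 0" unfolding Rh_def by simp
  have "(\<gamma>0 - \<gamma>p) * Rh = 2 * L' + (\<gamma>0 - \<gamma>p)" unfolding Rh_def using d by (simp add: field_simps)
  then show "2 * L' \<le> (\<gamma>0 - \<gamma>p) * Rh" using d by simp
qed

lemma beta_pos: "\<beta> > 0" using eh_pos L'_nonneg by (simp add: \<beta>_def add_nonneg_pos)

lemma beta_K: "2 * \<beta> * L' \<le> \<epsilon>h"
proof -
  have "2 * \<beta> * L' = \<epsilon>h * (2 * L' / (2 * L' + 1))" using L'_nonneg by (simp add: \<beta>_def field_simps)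
  also have "\<dots> \<le> \<epsilon>h * 1" using eh_pos L'_nonneg by (intro mult_left_mono) auto
  finally show ?thesis by simp
qed

lemma rho_bounds: "0 \<le> \<rho>" "\<rho> < 1"
proof -
  show "0 \<le> \<rho>" using g0_bounds by (simp add: \<rho>_def)
  have "(2 + \<beta> * \<gamma>0 * Rh) / (2 + \<beta> * Rh) < 1"
  proof -
    have "\<beta> * \<gamma>0 * Rh < \<beta> * Rh" using beta_pos Rh_pos g0_bounds by simp
    moreover have "0 < 2 + \<beta> * Rh" using beta_pos Rh_pos by (simp add: add_pos_pos)
    ultimately show ?thesis by simp
  qed
  then show "\<rho> < 1" using g0_bounds eh_pos by (simp add: \<rho>_def)
qed

lemma contract:
  fixes \<phi> :: "(nat \<Rightarrow> real) \<Rightarrow> real"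
  assumes \<phi>m: "\<phi> \<in> borel_measurable S"
    and \<phi>B: "\<And>x y. x \<in> space S \<Longrightarrow> y \<in> space S \<Longrightarrow> \<bar>\<phi> x - \<phi> y\<bar> \<le> B * (2 + \<beta> * V x + \<beta> * V y)"
    and x: "x \<in> space S" and y: "y \<in> space S"
  shows "integrable (Pn p x) \<phi> \<and> \<bar>(\<integral>z. \<phi> z \<partial>Pn p x) - (\<integral>z. \<phi> z \<partial>Pn p y)\<bar> \<le> \<rho> * B * (2 + \<beta> * V x + \<beta> * V y)"
proof (rule harris_step[where S=S and \<kappa>="Pn p" and V=V and \<gamma>=\<gamma>p and K=L' and R=Rh and \<epsilon>=\<epsilon>h and \<gamma>0=\<gamma>0])
  show "\<And>x. x \<in> space S \<Longrightarrow> prob_space (Pn p x)" by (rule prob_Pn)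
  show "\<And>x. x \<in> space S \<Longrightarrow> sets (Pn p x) = sets S" by (rule sets_Pn)
  show "V \<in> borel_measurable S" by (rule V_meas)
  show "\<And>x. x \<in> space S \<Longrightarrow> 0 \<le> V x" using V_ge1 order_trans zero_le_one by blast
  show "\<And>x. x \<in> space S \<Longrightarrow> (\<integral>\<^sup>+y. V y \<partial>Pn p x) \<le> ennreal (\<gamma>p * V x + L')"
    unfolding \<gamma>p_def by (rule PVn)
  show "\<And>x y g h t. x \<in> space S \<Longrightarrow> y \<in> space S \<Longrightarrow> V x + V y \<le> Rh \<Longrightarrow>
        g \<in> borel_measurable S \<Longrightarrow> h \<in> borel_measurable S \<Longrightarrow>
        (\<forall>z\<in>space S. 0 \<le> g z \<and> 0 \<le> h z \<and> t \<le> g z + h z) \<Longrightarrow> 0 \<le> t \<Longrightarrow>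
        ennreal (\<epsilon>h * t) \<le> (\<integral>\<^sup>+z. g z \<partial>Pn p x) + (\<integral>\<^sup>+z. h z \<partial>Pn p y)"
    using DB_eh unfolding DB_def by blast
  show "0 \<le> \<gamma>p" "\<gamma>p \<le> \<gamma>0" "0 \<le> L'" "2 * L' \<le> (\<gamma>0 - \<gamma>p) * Rh" "0 < \<beta>" "2 * \<beta> * L' \<le> \<epsilon>h"
    using gp_bounds g0_bounds L'_nonneg KR beta_pos beta_K by auto
  show "(2 + \<beta> * \<gamma>0 * Rh) / (2 + \<beta> * Rh) \<le> \<rho>" "1 - \<epsilon>h / 2 \<le> \<rho>" "\<gamma>0 \<le> \<rho>"
    unfolding \<rho>_def by auto
  show "\<gamma>0 \<le> 1" "0 \<le> Rh" using g0_bounds Rh_pos by auto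
qed (use assms in auto)

lemma iterate:
  fixes g :: "(nat \<Rightarrow> real) \<Rightarrow> real"
  assumes g[measurable]: "g \<in> borel_measurable S" and gb: "\<forall>y\<in>space S. \<bar>g y\<bar> \<le> C * V y"
    and base: "\<And>x y. x \<in> space S \<Longrightarrow> y \<in> space S \<Longrightarrow>
        \<bar>(\<integral>z. g z \<partial>Pn j x) - (\<integral>z. g z \<partial>Pn j y)\<bar> \<le> B * (2 + \<beta> * V x + \<beta> * V y)"
  shows "x \<in> space S \<Longrightarrow> y \<in> space S \<Longrightarrow>
     \<bar>(\<integral>z. g z \<partial>Pn (m * p + j) x) - (\<integral>z. g z \<partial>Pn (m * p + j) y)\<bar> \<le> \<rho> ^ m * B * (2 + \<beta> * V x + \<beta> * V y)"
proof (induction m arbitrary: x y)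
  case 0 then show ?case using base by simp
next
  case (Suc m)
  define \<psi> where "\<psi> v = (\<integral>z. g z \<partial>Pn (m * p + j) v)" for v
  have \<psi>m: "\<psi> \<in> borel_measurable S" unfolding \<psi>_def[abs_def] by (rule Pn_integral_meas[OF g])
  have e: "(\<integral>z. g z \<partial>Pn (Suc m * p + j) v) = (\<integral>w. \<psi> w \<partial>Pn p v)" if "v \<in> space S" for v
  proof -
    have "Suc m * p + j = p + (m * p + j)" by simp
    then show ?thesis using int_Pn_add[OF that g gb, of p "m * p + j"] by (simp add: \<psi>_def add.assoc)
  qed
  have "\<bar>(\<integral>w. \<psi> w \<partial>Pn p x) - (\<integral>w. \<psi> w \<partial>Pn p y)\<bar> \<le> \<rho> * (\<rho> ^ m * B) * (2 + \<beta> * V x + \<beta> * V y)"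
    using contract[OF \<psi>m _ Suc.prems] Suc.IH unfolding \<psi>_def by blast
  then show ?case using e[OF Suc.prems(1)] e[OF Suc.prems(2)] by (simp add: mult.assoc)
qed

definition "B0 = max (1 / \<beta>) L'"

lemma intV_bound: assumes x: "x \<in> space S"
  shows "integrable (Pn n x) V \<and> (\<integral>z. V z \<partial>Pn n x) \<le> V x + L'"
proof -
  have iV: "integrable (Pn n x) V"
    by (rule int_Pn[OF x V_meas, where C=1]) (use V_ge1 in \<open>auto intro: order_trans[OF zero_le_one]\<close>)
  have "ennreal (\<integral>z. V z \<partial>Pn n x) = (\<integral>\<^sup>+z. V z \<partial>Pn n x)"
    by (rule nn_integral_eq_integral[symmetric, OF iV]) (use V_ge1 in \<open>auto intro: AE_I2 order_trans[OF zero_le_one]\<close>)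
  also have "\<dots> \<le> ennreal (V x + L')" by (rule PVn'[OF x])
  finally have "ennreal (\<integral>z. V z \<partial>Pn n x) \<le> ennreal (V x + L')" .
  moreover have "0 \<le> V x + L'" using V_ge1[of x] L'_nonneg by simp
  ultimately show ?thesis using iV by (simp only: ennreal_le_iff)
qed

lemma Gbound:
  fixes g :: "(nat \<Rightarrow> real) \<Rightarrow> real"
  assumes g[measurable]: "g \<in> borel_measurable S" and gb: "\<forall>y\<in>space S. \<bar>g y\<bar> \<le> V y"
    and x: "x \<in> space S" and y: "y \<in> space S"
  shows "\<bar>(\<integral>z. g z \<partial>Pn n x) - (\<integral>z. g z \<partial>Pn n y)\<bar> \<le> \<rho> ^ (n div p) * B0 * (2 + \<beta> * V x + \<beta> * V y)"
proof -
  have gb1: "\<forall>y\<in>space S. \<bar>g y\<bar> \<le> 1 * V y" using gb by simp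
  have absb: "\<bar>\<integral>z. g z \<partial>Pn j v\<bar> \<le> V v + L'" if v: "v \<in> space S" for v j
  proof -
    have sp: "space (Pn j v) = space S" using space_Pn[OF v] .
    have "\<bar>\<integral>z. g z \<partial>Pn j v\<bar> \<le> (\<integral>z. \<bar>g z\<bar> \<partial>Pn j v)" by (rule integral_abs_bound)
    also have "\<dots> \<le> (\<integral>z. V z \<partial>Pn j v)"
    proof (rule integral_mono)
      show "integrable (Pn j v) V" using intV_bound[OF v] by simp
      show "integrable (Pn j v) (\<lambda>z. \<bar>g z\<bar>)" using int_Pn[OF v g gb1] by simp
    qed (use gb sp in auto)
    also have "\<dots> \<le> V v + L'" using intV_bound[OF v] by simp
    finally show ?thesis .
  qed
  have base: "\<bar>(\<integral>z. g z \<partial>Pn (n mod p) x') - (\<integral>z. g z \<partial>Pn (n mod p) y')\<bar> \<le> B0 * (2 + \<beta> * V x' + \<beta> * V y')"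
    if x': "x' \<in> space S" and y': "y' \<in> space S" for x' y'
  proof -
    have "\<bar>(\<integral>z. g z \<partial>Pn (n mod p) x') - (\<integral>z. g z \<partial>Pn (n mod p) y')\<bar> \<le> (V x' + L') + (V y' + L')"
      using absb[OF x', of "n mod p"] absb[OF y', of "n mod p"] by linarith
    also have "\<dots> \<le> B0 * (2 + \<beta> * V x' + \<beta> * V y')"
    proof -
      have b1: "1 \<le> B0 * \<beta>"
      proof -
        have "1 / \<beta> * \<beta> \<le> B0 * \<beta>" using beta_pos by (intro mult_right_mono) (auto simp: B0_def)
        then show ?thesis using beta_pos by simp
      qed
      have b2: "L' \<le> B0" by (simp add: B0_def)
      have "V x' \<le> B0 * \<beta> * V x'" using b1 V_ge1[of x'] by (simp add: mult_le_cancel_right1)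
      moreover have "V y' \<le> B0 * \<beta> * V y'" using b1 V_ge1[of y'] by (simp add: mult_le_cancel_right1)
      ultimately show ?thesis using b2 by (simp add: algebra_simps)
    qed
    finally show ?thesis .
  qed
  have "n = (n div p) * p + n mod p" by simp
  then show ?thesis using iterate[OF g gb1 base x y, of "n div p"] by simp
qed


end


lemma uni_cauchy:
  fixes a e :: "nat \<Rightarrow> real"
  assumes ae: "\<And>n k. \<bar>a (n + k) - a n\<bar> \<le> e n" and e0: "e \<longlonglongrightarrow> 0"
  shows "a \<longlonglongrightarrow> lim a" and "\<And>n. \<bar>lim a - a n\<bar> \<le> e n"
proof -
  have "Cauchy a"
  proof (rule metric_CauchyI)
    fix \<epsilon> :: real assume \<epsilon>: "\<epsilon> > 0"
    obtain N where N: "\<forall>n\<ge>N. norm (e n - 0) < \<epsilon> / 2"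
      using e0 \<epsilon> unfolding LIMSEQ_iff by (metis half_gt_zero)
    have "\<forall>m\<ge>N. \<forall>n\<ge>N. dist (a m) (a n) < \<epsilon>"
    proof (intro allI impI)
      fix m n assume m: "m \<ge> N" and n: "n \<ge> N"
      have "\<bar>a (N + (m - N)) - a N\<bar> \<le> e N" by (rule ae)
      then have 1: "\<bar>a m - a N\<bar> \<le> e N" using m by simp
      have "\<bar>a (N + (n - N)) - a N\<bar> \<le> e N" by (rule ae)
      then have 2: "\<bar>a n - a N\<bar> \<le> e N" using n by simp
      have "e N < \<epsilon> / 2" using N by auto
      then show "dist (a m) (a n) < \<epsilon>" using 1 2 by (simp add: dist_real_def)
    qed
    then show "\<exists>M. \<forall>m\<ge>M. \<forall>n\<ge>M. dist (a m) (a n) < \<epsilon>" by blast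
  qed
  then show conv: "a \<longlonglongrightarrow> lim a" by (simp add: Cauchy_convergent_iff convergent_LIMSEQ_iff)
  fix n
  have "(\<lambda>k. \<bar>a (k + n) - a n\<bar>) \<longlonglongrightarrow> \<bar>lim a - a n\<bar>"
    by (intro tendsto_intros LIMSEQ_ignore_initial_segment[OF conv])
  then show "\<bar>lim a - a n\<bar> \<le> e n"
  proof (rule LIMSEQ_le_const2)
    have "\<forall>k. \<bar>a (k + n) - a n\<bar> \<le> e n"
    proof
      fix k show "\<bar>a (k + n) - a n\<bar> \<le> e n" using ae[of n k] by (simp add: add.commute)
    qed
    then show "\<exists>N. \<forall>k\<ge>N. \<bar>a (k + n) - a n\<bar> \<le> e n" by blast
  qed
qed

lemma layer:
  fixes h :: "'a \<Rightarrow> real"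
  assumes M: "prob_space M" and hm[measurable]: "h \<in> borel_measurable M"
    and h01: "\<And>y. y \<in> space M \<Longrightarrow> 0 \<le> h y \<and> h y \<le> 1"
  shows "(\<integral>\<^sup>+y. ennreal (h y) \<partial>M) = (\<integral>\<^sup>+t. ennreal (measure M {y\<in>space M. t < h y}) * indicator {0..1} t \<partial>lborel)"
proof -
  interpret prob_space M by (rule M)
  interpret pair_sigma_finite M lborel by standard
  define F where "F y t = (if t < h y then 1 else 0) * (indicator {0..1} t :: ennreal)" for y t
  have Fm: "case_prod F \<in> borel_measurable (M \<Otimes>\<^sub>M lborel)" unfolding F_def by measurable
  have "(\<integral>\<^sup>+y. ennreal (h y) \<partial>M) = (\<integral>\<^sup>+y. (\<integral>\<^sup>+t. F y t \<partial>lborel) \<partial>M)"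
  proof (rule nn_integral_cong)
    fix y assume y: "y \<in> space M"
    have "(\<integral>\<^sup>+t. F y t \<partial>lborel) = (\<integral>\<^sup>+t. indicator {0..<h y} t \<partial>lborel)"
      using h01[OF y] by (intro nn_integral_cong) (auto simp: F_def indicator_def)
    also have "\<dots> = ennreal (h y)" using h01[OF y] by simp
    finally show "ennreal (h y) = (\<integral>\<^sup>+t. F y t \<partial>lborel)" by simp
  qed
  also have "\<dots> = (\<integral>\<^sup>+t. (\<integral>\<^sup>+y. F y t \<partial>M) \<partial>lborel)"
    by (rule Fubini'[symmetric, OF Fm])
  also have "\<dots> = (\<integral>\<^sup>+t. ennreal (measure M {y\<in>space M. t < h y}) * indicator {0..1} t \<partial>lborel)"
  proof (rule nn_integral_cong)
    fix t :: real
    have "(\<integral>\<^sup>+y. F y t \<partial>M) = (\<integral>\<^sup>+y. indicator {y\<in>space M. t < h y} y * indicator {0..1} t \<partial>M)"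
      by (intro nn_integral_cong) (auto simp: F_def indicator_def)
    also have "\<dots> = emeasure M {y\<in>space M. t < h y} * indicator {0..1} t"
      by (subst nn_integral_multc) auto
    also have "\<dots> = ennreal (measure M {y\<in>space M. t < h y}) * indicator {0..1} t"
      by (simp add: emeasure_eq_measure)
    finally show "(\<integral>\<^sup>+y. F y t \<partial>M) = ennreal (measure M {y\<in>space M. t < h y}) * indicator {0..1} t" .
  qed
  finally show ?thesis .
qed

lemma cmp_integral:
  fixes h :: "'a \<Rightarrow> real"
  assumes M1: "prob_space M1" and M2: "prob_space M2" and ss: "sets M1 = sets M2"
    and me: "\<And>A. A \<in> sets M1 \<Longrightarrow> measure M1 A \<le> measure M2 A + e" and e0: "0 \<le> e"
    and hm[measurable]: "h \<in> borel_measurable M1"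
    and h01: "\<And>y. y \<in> space M1 \<Longrightarrow> 0 \<le> h y \<and> h y \<le> 1"
  shows "(\<integral>y. h y \<partial>M1) \<le> (\<integral>y. h y \<partial>M2) + e"
proof -
  have sp: "space M1 = space M2" using ss by (rule sets_eq_imp_space_eq)
  have hm2: "h \<in> borel_measurable M2" using hm measurable_cong_sets[OF ss refl] by blast
  have h02: "\<And>y. y \<in> space M2 \<Longrightarrow> 0 \<le> h y \<and> h y \<le> 1" using h01 sp by auto
  have "(\<integral>\<^sup>+y. ennreal (h y) \<partial>M1) \<le> (\<integral>\<^sup>+y. ennreal (h y) \<partial>M2) + ennreal e"
  proof -
    have "(\<integral>\<^sup>+y. ennreal (h y) \<partial>M1) = (\<integral>\<^sup>+t. ennreal (measure M1 {y\<in>space M1. t < h y}) * indicator {0..1} t \<partial>lborel)"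
      by (rule layer[OF M1 hm h01])
    also have "\<dots> \<le> (\<integral>\<^sup>+t. ennreal (measure M2 {y\<in>space M2. t < h y}) * indicator {0..1} t + ennreal e * indicator {0..1} t \<partial>lborel)"
    proof (rule nn_integral_mono)
      fix t :: real
      have A: "{y\<in>space M1. t < h y} \<in> sets M1" by measurable
      have "measure M1 {y\<in>space M1. t < h y} \<le> measure M2 {y\<in>space M2. t < h y} + e"
        using me[OF A] sp by simp
      then have "ennreal (measure M1 {y\<in>space M1. t < h y}) \<le> ennreal (measure M2 {y\<in>space M2. t < h y}) + ennreal e"
        using e0 by (simp add: ennreal_plus[symmetric] del: ennreal_plus)
      then show "ennreal (measure M1 {y\<in>space M1. t < h y}) * indicator {0..1} t
          \<le> ennreal (measure M2 {y\<in>space M2. t < h y}) * indicator {0..1} t + ennreal e * indicator {0..1} t"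
        by (auto simp: indicator_def)
    qed
    also have "\<dots> = (\<integral>\<^sup>+t. ennreal (measure M2 {y\<in>space M2. t < h y}) * indicator {0..1} t \<partial>lborel) + ennreal e"
    proof -
      have m: "(\<lambda>t. ennreal (measure M2 {y\<in>space M2. t < h y}) * indicator {0..1} t) \<in> borel_measurable lborel"
      proof -
        have "(\<lambda>t. ennreal (measure M2 {y\<in>space M2. t < h y}) * indicator {0..1} t) = (\<lambda>t. \<integral>\<^sup>+y. (if t < h y then 1 else 0) * (indicator {0..1} t :: ennreal) \<partial>M2)"
        proof
          fix t :: real
          interpret prob_space M2 by (rule M2)
          have "(\<integral>\<^sup>+y. (if t < h y then 1 else 0) * (indicator {0..1} t :: ennreal) \<partial>M2)
              = (\<integral>\<^sup>+y. indicator {y\<in>space M2. t < h y} y * indicator {0..1} t \<partial>M2)"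
            by (intro nn_integral_cong) (auto simp: indicator_def)
          also have "\<dots> = emeasure M2 {y\<in>space M2. t < h y} * indicator {0..1} t"
            using hm2 by (subst nn_integral_multc) auto
          finally show "ennreal (measure M2 {y\<in>space M2. t < h y}) * indicator {0..1} t = (\<integral>\<^sup>+y. (if t < h y then 1 else 0) * (indicator {0..1} t :: ennreal) \<partial>M2)"
            by (simp add: emeasure_eq_measure)
        qed
        also have "\<dots> \<in> borel_measurable lborel"
        proof -
          interpret prob_space M2 by (rule M2)
          interpret pair_sigma_finite lborel M2 by standard
          have "(\<lambda>(t, y). (if t < h y then 1 else 0) * (indicator {0..1} t :: ennreal)) \<in> borel_measurable (lborel \<Otimes>\<^sub>M M2)"
            using hm2 by measurable
          then show ?thesis using sigma_finite_measure.borel_measurable_nn_integral[of M2] M2 prob_space_imp_sigma_finite by auto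
        qed
        finally show ?thesis .
      qed
      show ?thesis
        by (subst nn_integral_add[OF m]) (auto simp: nn_integral_cmult)
    qed
    also have "(\<integral>\<^sup>+t. ennreal (measure M2 {y\<in>space M2. t < h y}) * indicator {0..1} t \<partial>lborel) = (\<integral>\<^sup>+y. ennreal (h y) \<partial>M2)"
      by (rule layer[symmetric, OF M2 hm2 h02])
    finally show ?thesis .
  qed
  moreover have "(\<integral>\<^sup>+y. ennreal (h y) \<partial>M1) = ennreal (\<integral>y. h y \<partial>M1)"
  proof -
    interpret prob_space M1 by (rule M1)
    show ?thesis by (rule nn_integral_eq_integral) (auto intro!: integrable_const_bound[where B=1] AE_I2 simp: h01)
  qed
  moreover have "(\<integral>\<^sup>+y. ennreal (h y) \<partial>M2) = ennreal (\<integral>y. h y \<partial>M2)"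
  proof -
    interpret prob_space M2 by (rule M2)
    show ?thesis by (rule nn_integral_eq_integral) (use hm2 in \<open>auto intro!: integrable_const_bound[where B=1] AE_I2 simp: h02\<close>)
  qed
  moreover have "0 \<le> (\<integral>y. h y \<partial>M2)" using h02 by (auto intro!: integral_nonneg_AE AE_I2)
  ultimately show ?thesis using e0 by (simp add: ennreal_plus[symmetric] del: ennreal_plus)
qed



context arch_full
begin

definition "x0 = (\<lambda>i\<in>{..<p}. 0::real)"
lemma x0_space: "x0 \<in> space S" by (simp add: x0_def space_stateM)

definition "\<rho>1 = max \<rho> (1/2)"
definition "\<theta> = \<rho>1 powr (1 / real p)"

lemma rho1_bounds: "1/2 \<le> \<rho>1" "\<rho>1 < 1" "\<rho> \<le> \<rho>1"
  using rho_bounds by (auto simp: \<rho>1_def)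

lemma theta_bounds: "0 < \<theta>" "\<theta> < 1"
proof -
  show "0 < \<theta>" using rho1_bounds by (simp add: \<theta>_def)
  have "\<rho>1 powr (1 / real p) < 1 powr (1 / real p)"
    using rho1_bounds p1 by (intro powr_less_mono2) auto
  then show "\<theta> < 1" by (simp add: \<theta>_def)
qed

lemma theta_p: "\<theta> ^ p = \<rho>1"
proof -
  have "\<theta> ^ p = \<theta> powr real p" using theta_bounds by (simp add: powr_realpow)
  also have "\<dots> = \<rho>1 powr (1 / real p * real p)" unfolding \<theta>_def by (simp add: powr_powr)
  also have "\<dots> = \<rho>1" using p1 rho1_bounds by simp
  finally show ?thesis .
qed

lemma rate: "\<rho> ^ (n div p) \<le> \<theta> ^ n / \<rho>1"
proof -
  have "\<rho> ^ (n div p) \<le> \<rho>1 ^ (n div p)" using rho_bounds rho1_bounds by (intro power_mono) auto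
  also have "\<dots> = \<rho>1 ^ Suc (n div p) / \<rho>1" using rho1_bounds by simp
  also have "\<rho>1 ^ Suc (n div p) = \<theta> ^ (p * Suc (n div p))" by (simp only: power_mult theta_p)
  also have "\<dots> \<le> \<theta> ^ n"
  proof (rule power_decreasing)
    have "p * (n div p) + n mod p = n" by (rule mult_div_mod_eq)
    moreover have "n mod p < p" using p1 by simp
    ultimately show "n \<le> p * Suc (n div p)" by (simp only: mult_Suc_right)
  qed (use theta_bounds in auto)
  finally show ?thesis using rho1_bounds by (simp add: divide_right_mono)
qed

definition "D = B0 * (2 + \<beta> * (V x0 + L') + \<beta> * V x0)"
definition "e n = D * (\<theta> ^ n / \<rho>1)"

lemma B0_nonneg: "0 \<le> B0" using beta_pos by (simp add: B0_def le_max_iff_disj)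

lemma D_nonneg: "0 \<le> D"
  unfolding D_def using B0_nonneg beta_pos V_ge1[of x0] L'_nonneg by (intro mult_nonneg_nonneg) auto

lemma e_nonneg: "0 \<le> e n" unfolding e_def using D_nonneg theta_bounds rho1_bounds by simp

lemma e_lim: "e \<longlonglongrightarrow> 0"
proof -
  have "(\<lambda>n. \<theta> ^ n) \<longlonglongrightarrow> 0" using theta_bounds by (intro LIMSEQ_power_zero) simp
  then have "(\<lambda>n. D * (\<theta> ^ n / \<rho>1)) \<longlonglongrightarrow> D * (0 / \<rho>1)"
    using rho1_bounds theta_bounds by (intro tendsto_intros) auto
  then show ?thesis by (simp add: e_def[abs_def])
qed

lemma cauchy_g:
  fixes g :: "(nat \<Rightarrow> real) \<Rightarrow> real"
  assumes g[measurable]: "g \<in> borel_measurable S" and gb: "\<forall>y\<in>space S. \<bar>g y\<bar> \<le> V y"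
  shows "\<bar>(\<integral>z. g z \<partial>Pn (n + k) x0) - (\<integral>z. g z \<partial>Pn n x0)\<bar> \<le> e n"
proof -
  have gb1: "\<forall>y\<in>space S. \<bar>g y\<bar> \<le> 1 * V y" using gb by simp
  define G where "G y = (\<integral>z. g z \<partial>Pn n y)" for y
  interpret Pk: prob_space "Pn k x0" using prob_Pn[OF x0_space] .
  have sp: "space (Pn k x0) = space S" using space_Pn[OF x0_space] .
  have ad: "integrable (Pn k x0) G \<and> (\<integral>z. g z \<partial>Pn (k + n) x0) = (\<integral>y. G y \<partial>Pn k x0)"
    using int_Pn_add[OF x0_space g gb1, of k n] unfolding G_def by simp
  have iV: "integrable (Pn k x0) V" and IV: "(\<integral>z. V z \<partial>Pn k x0) \<le> V x0 + L'"
    using intV_bound[OF x0_space] by auto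
  define c where "c = \<rho> ^ (n div p) * B0"
  have c0: "0 \<le> c" unfolding c_def using rho_bounds B0_nonneg by simp
  have "(\<integral>z. g z \<partial>Pn (n + k) x0) - (\<integral>z. g z \<partial>Pn n x0) = (\<integral>y. G y - G x0 \<partial>Pn k x0)"
  proof -
    have "(\<integral>y. G y - G x0 \<partial>Pn k x0) = (\<integral>y. G y \<partial>Pn k x0) - (\<integral>y. G x0 \<partial>Pn k x0)"
      using ad by (intro Bochner_Integration.integral_diff) auto
    also have "(\<integral>y. G x0 \<partial>Pn k x0) = G x0" using Pk.prob_space by simp
    finally show ?thesis using ad by (simp add: add.commute G_def)
  qed
  also have "\<bar>\<dots>\<bar> \<le> (\<integral>y. \<bar>G y - G x0\<bar> \<partial>Pn k x0)" by (rule integral_abs_bound)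
  also have "\<dots> \<le> (\<integral>y. c * (2 + \<beta> * V x0) + (c * \<beta>) * V y \<partial>Pn k x0)"
  proof (rule integral_mono)
    show "integrable (Pn k x0) (\<lambda>y. \<bar>G y - G x0\<bar>)" using ad by auto
    show "integrable (Pn k x0) (\<lambda>y. c * (2 + \<beta> * V x0) + (c * \<beta>) * V y)" using iV by auto
    fix y assume "y \<in> space (Pn k x0)"
    then have y: "y \<in> space S" using sp by simp
    have "\<bar>G y - G x0\<bar> \<le> \<rho> ^ (n div p) * B0 * (2 + \<beta> * V y + \<beta> * V x0)"
      unfolding G_def by (rule Gbound[OF g gb y x0_space])
    then show "\<bar>G y - G x0\<bar> \<le> c * (2 + \<beta> * V x0) + (c * \<beta>) * V y" by (simp add: c_def algebra_simps)
  qed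
  also have "\<dots> = c * (2 + \<beta> * V x0) + (c * \<beta>) * (\<integral>y. V y \<partial>Pn k x0)"
    using iV Pk.prob_space by simp
  also have "\<dots> \<le> c * (2 + \<beta> * V x0) + (c * \<beta>) * (V x0 + L')"
    using IV c0 beta_pos by (intro add_left_mono mult_left_mono) auto
  also have "\<dots> = \<rho> ^ (n div p) * D" by (simp add: c_def D_def algebra_simps)
  also have "\<dots> \<le> e n" unfolding e_def using mult_left_mono[OF rate[of n] D_nonneg]
    by (simp add: mult.commute)
  finally show ?thesis .
qed

definition "\<Gamma>0 A = lim (\<lambda>n. measure (Pn n x0) A)"

lemma Gamma0_conv:
  assumes A: "A \<in> sets S"
  shows "(\<lambda>n. measure (Pn n x0) A) \<longlonglongrightarrow> \<Gamma>0 A" and "\<And>n. \<bar>\<Gamma>0 A - measure (Pn n x0) A\<bar> \<le> e n"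
proof -
  have mi: "measure (Pn n x0) A = (\<integral>z. indicator A z \<partial>Pn n x0)" for n
  proof -
    interpret prob_space "Pn n x0" using prob_Pn[OF x0_space] .
    show ?thesis using A sets_Pn[OF x0_space] by simp
  qed
  have ig: "indicator A \<in> borel_measurable S" using A by simp
  have ib: "\<forall>y\<in>space S. \<bar>indicator A y :: real\<bar> \<le> V y"
    using V_ge1 by (auto simp: indicator_def intro: order_trans[OF zero_le_one])
  have ae: "\<bar>measure (Pn (n + k) x0) A - measure (Pn n x0) A\<bar> \<le> e n" for n k
    unfolding mi by (rule cauchy_g[OF ig ib])
  show "(\<lambda>n. measure (Pn n x0) A) \<longlonglongrightarrow> \<Gamma>0 A" unfolding \<Gamma>0_def[abs_def] by (rule uni_cauchy(1)[OF ae e_lim])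
  show "\<And>n. \<bar>\<Gamma>0 A - measure (Pn n x0) A\<bar> \<le> e n" unfolding \<Gamma>0_def[abs_def] by (rule uni_cauchy(2)[OF ae e_lim])
qed

end


context arch_full
begin

lemma mu_prob: "prob_space (Pn n x0)" by (rule prob_Pn[OF x0_space])
lemma mu_sets: "sets (Pn n x0) = sets S" by (rule sets_Pn[OF x0_space])

lemma Gamma0_01: assumes A: "A \<in> sets S" shows "0 \<le> \<Gamma>0 A" "\<Gamma>0 A \<le> 1"
proof -
  note cv = Gamma0_conv(1)[OF A]
  show "0 \<le> \<Gamma>0 A" by (rule LIMSEQ_le_const[OF cv]) auto
  show "\<Gamma>0 A \<le> 1"
  proof (rule LIMSEQ_le_const2[OF cv])
    show "\<exists>N. \<forall>n\<ge>N. measure (Pn n x0) A \<le> 1"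
      using prob_space.prob_le_1[OF mu_prob] by blast
  qed
qed

lemma Gamma0_lim_eq: "A \<in> sets S \<Longrightarrow> (\<lambda>n. measure (Pn n x0) A) \<longlonglongrightarrow> cc \<Longrightarrow> \<Gamma>0 A = cc"
  using Gamma0_conv(1) LIMSEQ_unique by blast

lemma Gamma0_empty: "\<Gamma>0 {} = 0"
  by (rule Gamma0_lim_eq) auto

lemma Gamma0_space: "\<Gamma>0 (space S) = 1"
proof (rule Gamma0_lim_eq)
  have "measure (Pn n x0) (space S) = 1" for n
    using prob_space.prob_space[OF mu_prob[of n]] space_Pn[OF x0_space, of n] by simp
  then show "(\<lambda>n. measure (Pn n x0) (space S)) \<longlonglongrightarrow> 1" by simp
qed simp

lemma Gamma0_add: assumes A: "A \<in> sets S" and B: "B \<in> sets S" and AB: "A \<inter> B = {}"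
  shows "\<Gamma>0 (A \<union> B) = \<Gamma>0 A + \<Gamma>0 B"
proof (rule Gamma0_lim_eq)
  show "A \<union> B \<in> sets S" using A B by simp
  have "measure (Pn n x0) (A \<union> B) = measure (Pn n x0) A + measure (Pn n x0) B" for n
  proof -
    interpret prob_space "Pn n x0" by (rule mu_prob)
    show ?thesis using A B AB mu_sets by (intro finite_measure_Union) auto
  qed
  then show "(\<lambda>n. measure (Pn n x0) (A \<union> B)) \<longlonglongrightarrow> \<Gamma>0 A + \<Gamma>0 B"
    using tendsto_add[OF Gamma0_conv(1)[OF A] Gamma0_conv(1)[OF B]] by simp
qed

lemma Gamma0_cont:
  assumes A: "range A \<subseteq> sets S" and dA: "decseq A" and e: "(\<Inter>i. A i) = {}"
  shows "(\<lambda>i. \<Gamma>0 (A i)) \<longlonglongrightarrow> 0"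
proof (rule LIMSEQ_I)
  fix r :: real assume r: "r > 0"
  obtain n where n: "e n < r / 2"
    using e_lim r unfolding LIMSEQ_iff by (metis half_gt_zero diff_zero e_nonneg abs_of_nonneg real_norm_def le_refl)
  interpret prob_space "Pn n x0" by (rule mu_prob)
  have "(\<lambda>i. measure (Pn n x0) (A i)) \<longlonglongrightarrow> measure (Pn n x0) (\<Inter>i. A i)"
    using A dA mu_sets by (intro finite_Lim_measure_decseq) auto
  then have "(\<lambda>i. measure (Pn n x0) (A i)) \<longlonglongrightarrow> 0" using e by simp
  then obtain N where N: "\<forall>i\<ge>N. norm (measure (Pn n x0) (A i) - 0) < r / 2"
    using r unfolding LIMSEQ_iff by (metis half_gt_zero)
  show "\<exists>N. \<forall>i\<ge>N. norm (\<Gamma>0 (A i) - 0) < r"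
  proof (intro exI allI impI)
    fix i assume i: "i \<ge> N"
    have Ai: "A i \<in> sets S" using A by auto
    have "\<Gamma>0 (A i) \<le> measure (Pn n x0) (A i) + e n" using Gamma0_conv(2)[OF Ai, of n] by linarith
    moreover have "measure (Pn n x0) (A i) < r / 2" using N i by auto
    ultimately show "norm (\<Gamma>0 (A i) - 0) < r" using Gamma0_01[OF Ai] n by simp
  qed
qed

lemma Gamma0_ca: "countably_additive (sets S) (\<lambda>A. ennreal (\<Gamma>0 A))"
proof (rule sets.empty_continuous_imp_countably_additive)
  show "positive (sets S) (\<lambda>A. ennreal (\<Gamma>0 A))" by (simp add: positive_def Gamma0_empty)
  show "additive (sets S) (\<lambda>A. ennreal (\<Gamma>0 A))"
    unfolding additive_def by (auto simp: Gamma0_add Gamma0_01 ennreal_plus)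
  show "\<forall>A\<in>sets S. ennreal (\<Gamma>0 A) \<noteq> \<infinity>" by simp
  fix A :: "nat \<Rightarrow> _" assume "range A \<subseteq> sets S" "decseq A" "(\<Inter>i. A i) = {}"
  then have "(\<lambda>i. \<Gamma>0 (A i)) \<longlonglongrightarrow> 0" by (rule Gamma0_cont)
  then have "(\<lambda>i. ennreal (\<Gamma>0 (A i))) \<longlonglongrightarrow> ennreal 0" by (rule tendsto_ennrealI)
  then show "(\<lambda>i. ennreal (\<Gamma>0 (A i))) \<longlonglongrightarrow> 0" by simp
qed

definition "\<Gamma> = measure_of (space S) (sets S) (\<lambda>A. ennreal (\<Gamma>0 A))"

lemma sets_Gamma: "sets \<Gamma> = sets S" unfolding \<Gamma>_def by simp
lemma space_Gamma: "space \<Gamma> = space S" unfolding \<Gamma>_def by simp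

lemma emeasure_Gamma: "A \<in> sets S \<Longrightarrow> emeasure \<Gamma> A = ennreal (\<Gamma>0 A)"
  unfolding \<Gamma>_def
  by (rule emeasure_measure_of_sigma[OF sets.sigma_algebra_axioms _ Gamma0_ca])
     (simp add: positive_def Gamma0_empty)

lemma prob_Gamma: "prob_space \<Gamma>"
  by (rule prob_spaceI) (simp add: space_Gamma emeasure_Gamma Gamma0_space)

lemma measure_Gamma: "A \<in> sets S \<Longrightarrow> measure \<Gamma> A = \<Gamma>0 A"
  by (simp add: measure_def emeasure_Gamma Gamma0_01)

lemma Gamma_close: "A \<in> sets S \<Longrightarrow> \<bar>measure \<Gamma> A - measure (Pn n x0) A\<bar> \<le> e n"
  using Gamma0_conv(2) measure_Gamma by simp

end


context arch_full
begin

lemma cmpB: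
  fixes h :: "(nat \<Rightarrow> real) \<Rightarrow> real"
  assumes hm[measurable]: "h \<in> borel_measurable S" and B: "0 < B"
    and h0B: "\<And>y. y \<in> space S \<Longrightarrow> 0 \<le> h y \<and> h y \<le> B"
  shows "(\<integral>y. h y \<partial>\<Gamma>) \<le> (\<integral>y. h y \<partial>Pn n x0) + B * e n"
    and "(\<integral>y. h y \<partial>Pn n x0) \<le> (\<integral>y. h y \<partial>\<Gamma>) + B * e n"
proof -
  define h' where "h' y = h y / B" for y
  have h'm: "h' \<in> borel_measurable S" unfolding h'_def by measurable
  have h'01: "0 \<le> h' y \<and> h' y \<le> 1" if "y \<in> space S" for y
    using h0B[OF that] B by (auto simp: h'_def divide_le_eq)
  have ss: "sets \<Gamma> = sets (Pn n x0)" by (simp add: sets_Gamma mu_sets)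
  have spG: "space \<Gamma> = space S" by (rule space_Gamma)
  have spP: "space (Pn n x0) = space S" by (rule space_Pn[OF x0_space])
  have c1: "(\<integral>y. h' y \<partial>\<Gamma>) \<le> (\<integral>y. h' y \<partial>Pn n x0) + e n"
  proof (rule cmp_integral[OF prob_Gamma mu_prob ss])
    fix A assume "A \<in> sets \<Gamma>"
    then have "A \<in> sets S" by (simp add: sets_Gamma)
    then show "measure \<Gamma> A \<le> measure (Pn n x0) A + e n" using Gamma_close[of A n] by (simp add: abs_le_iff)
  next
    show "h' \<in> borel_measurable \<Gamma>" using h'm by (simp add: measurable_cong_sets[OF sets_Gamma refl])
  qed (use e_nonneg h'01 spG in auto)
  have c2: "(\<integral>y. h' y \<partial>Pn n x0) \<le> (\<integral>y. h' y \<partial>\<Gamma>) + e n"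
  proof (rule cmp_integral[OF mu_prob prob_Gamma ss[symmetric]])
    fix A assume "A \<in> sets (Pn n x0)"
    then have "A \<in> sets S" by (simp add: mu_sets)
    then show "measure (Pn n x0) A \<le> measure \<Gamma> A + e n" using Gamma_close[of A n] by (simp add: abs_le_iff)
  next
    show "h' \<in> borel_measurable (Pn n x0)" using h'm by (simp add: measurable_cong_sets[OF mu_sets refl])
  qed (use e_nonneg h'01 spP in auto)
  have sc: "(\<integral>y. h y \<partial>M) = B * (\<integral>y. h' y \<partial>M)" for M
    using B by (simp add: h'_def)
  show "(\<integral>y. h y \<partial>\<Gamma>) \<le> (\<integral>y. h y \<partial>Pn n x0) + B * e n"
    unfolding sc using mult_left_mono[OF c1, of B] B by (simp add: algebra_simps)
  show "(\<integral>y. h y \<partial>Pn n x0) \<le> (\<integral>y. h y \<partial>\<Gamma>) + B * e n"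
    unfolding sc using mult_left_mono[OF c2, of B] B by (simp add: algebra_simps)
qed

lemma P_Gamma_meas: "P \<in> \<Gamma> \<rightarrow>\<^sub>M subprob_algebra S"
  using P_sub measurable_cong_sets[OF sets_Gamma refl] by blast

lemma Pn_Gamma_meas: "Pn n \<in> \<Gamma> \<rightarrow>\<^sub>M subprob_algebra S"
  using Pn_sub measurable_cong_sets[OF sets_Gamma refl] by blast

lemma zero_by_bound: assumes "\<And>n. \<bar>X\<bar> \<le> e n + e (Suc n)" shows "X = 0"
proof -
  have "(\<lambda>n. e n + e (Suc n)) \<longlonglongrightarrow> 0 + 0"
    by (intro tendsto_add e_lim) (rule LIMSEQ_Suc[OF e_lim])
  then have "(\<lambda>n. e n + e (Suc n)) \<longlonglongrightarrow> 0" by simp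
  then have "\<bar>X\<bar> \<le> 0" by (rule LIMSEQ_le_const) (use assms in auto)
  then show ?thesis by simp
qed

lemma invariant: "bind \<Gamma> P = \<Gamma>"
proof (rule measure_eqI)
  have ne: "space \<Gamma> \<noteq> {}" using space_Gamma x0_space by auto
  show sb: "sets (bind \<Gamma> P) = sets \<Gamma>"
    using sets_bind_measurable[OF P_Gamma_meas ne] sets_Gamma by simp
  fix A assume "A \<in> sets (bind \<Gamma> P)"
  then have A: "A \<in> sets S" using sb sets_Gamma by simp
  define h where "h y = measure (P y) A" for y
  have hm[measurable]: "h \<in> borel_measurable S"
  proof -
    have "(\<lambda>y. emeasure (P y) A) \<in> borel_measurable S"
      using measurable_compose[OF P_sub measurable_emeasure_subprob_algebra[OF A]] .
    then have "(\<lambda>y. enn2real (emeasure (P y) A)) \<in> borel_measurable S" by measurable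
    moreover have "h = (\<lambda>y. enn2real (emeasure (P y) A))" by (simp add: h_def[abs_def] measure_def)
    ultimately show ?thesis by simp
  qed
  have h01: "0 \<le> h y \<and> h y \<le> 1" if "y \<in> space S" for y
    unfolding h_def using prob_space.prob_le_1[OF prob_P[OF that]] by simp
  have eh: "emeasure (P y) A = ennreal (h y)" if "y \<in> space S" for y
  proof -
    interpret prob_space "P y" using prob_P[OF that] .
    show ?thesis unfolding h_def by (rule emeasure_eq_measure)
  qed
  have nnh: "(\<integral>\<^sup>+y. ennreal (h y) \<partial>M) = ennreal (\<integral>y. h y \<partial>M)"
    if M: "prob_space M" and sM: "sets M = sets S" for M
  proof -
    interpret prob_space M by (rule M)
    have spM: "space M = space S" using sM by (rule sets_eq_imp_space_eq)
    have hM: "h \<in> borel_measurable M" using hm measurable_cong_sets[OF sM refl] by blast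
    show ?thesis
      by (rule nn_integral_eq_integral) (use hM h01 spM in \<open>auto intro!: integrable_const_bound[where B=1] AE_I2\<close>)
  qed
  have e1: "emeasure (bind \<Gamma> P) A = ennreal (\<integral>y. h y \<partial>\<Gamma>)"
  proof -
    have "emeasure (bind \<Gamma> P) A = (\<integral>\<^sup>+y. emeasure (P y) A \<partial>\<Gamma>)"
      by (rule emeasure_bind[OF ne P_Gamma_meas A])
    also have "\<dots> = (\<integral>\<^sup>+y. ennreal (h y) \<partial>\<Gamma>)"
      by (intro nn_integral_cong) (simp add: eh space_Gamma)
    finally show ?thesis using nnh[OF prob_Gamma sets_Gamma] by simp
  qed
  have e2: "measure (Pn (Suc n) x0) A = (\<integral>y. h y \<partial>Pn n x0)" for n
  proof -
    have neP: "space (Pn n x0) \<noteq> {}" using space_Pn[OF x0_space] x0_space by auto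
    have "emeasure (Pn (Suc n) x0) A = (\<integral>\<^sup>+y. emeasure (P y) A \<partial>Pn n x0)"
      by (simp only: ar_nstep.simps) (rule emeasure_bind[OF neP meas_Pn_cong[OF x0_space P_sub] A])
    also have "\<dots> = (\<integral>\<^sup>+y. ennreal (h y) \<partial>Pn n x0)"
      by (intro nn_integral_cong) (simp add: eh space_Pn[OF x0_space])
    also have "\<dots> = ennreal (\<integral>y. h y \<partial>Pn n x0)" by (rule nnh[OF mu_prob mu_sets])
    finally have "emeasure (Pn (Suc n) x0) A = ennreal (\<integral>y. h y \<partial>Pn n x0)" .
    moreover have "emeasure (Pn (Suc n) x0) A = ennreal (measure (Pn (Suc n) x0) A)"
    proof -
      interpret prob_space "Pn (Suc n) x0" by (rule mu_prob)
      show ?thesis by (rule emeasure_eq_measure)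
    qed
    moreover have "0 \<le> (\<integral>y. h y \<partial>Pn n x0)"
      using h01 space_Pn[OF x0_space] by (auto intro!: integral_nonneg_AE AE_I2)
    ultimately show ?thesis by simp
  qed
  have "(\<integral>y. h y \<partial>\<Gamma>) - \<Gamma>0 A = 0"
  proof (rule zero_by_bound)
    fix n
    have c1: "(\<integral>y. h y \<partial>\<Gamma>) \<le> (\<integral>y. h y \<partial>Pn n x0) + 1 * e n"
      by (rule cmpB(1)[OF hm]) (use h01 in auto)
    have c2: "(\<integral>y. h y \<partial>Pn n x0) \<le> (\<integral>y. h y \<partial>\<Gamma>) + 1 * e n"
      by (rule cmpB(2)[OF hm]) (use h01 in auto)
    have c3: "\<bar>\<Gamma>0 A - measure (Pn (Suc n) x0) A\<bar> \<le> e (Suc n)" by (rule Gamma0_conv(2)[OF A])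
    show "\<bar>(\<integral>y. h y \<partial>\<Gamma>) - \<Gamma>0 A\<bar> \<le> e n + e (Suc n)"
      using c1 c2 c3 e2[of n] by (simp add: abs_le_iff)
  qed
  then show "emeasure (bind \<Gamma> P) A = emeasure \<Gamma> A"
    using e1 emeasure_Gamma[OF A] by simp
qed

lemma invariant_n: "bind \<Gamma> (Pn n) = \<Gamma>"
proof (induction n)
  case 0
  have "bind \<Gamma> (return S) = \<Gamma>" by (rule bind_return'') (simp add: sets_Gamma)
  then show ?case by simp
next
  case (Suc n)
  have "Pn (Suc n) = (\<lambda>y. bind (Pn n y) P)" by (simp add: fun_eq_iff)
  then have "bind \<Gamma> (Pn (Suc n)) = bind \<Gamma> (\<lambda>y. bind (Pn n y) P)" by simp
  also have "\<dots> = bind (bind \<Gamma> (Pn n)) P"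
    by (rule bind_assoc[symmetric, OF Pn_Gamma_meas P_sub])
  also have "\<dots> = \<Gamma>" using Suc invariant by simp
  finally show ?case .
qed

end


context arch_full
begin

lemma Gamma_V: "integrable \<Gamma> V" "(\<integral>\<^sup>+y. ennreal (V y) \<partial>\<Gamma>) \<le> ennreal (V x0 + L')"
proof -
  define F where "F i y = ennreal (min (V y) (real (Suc i)))" for i y
  have Fm: "F i \<in> borel_measurable \<Gamma>" for i
  proof -
    have "F i \<in> borel_measurable S" unfolding F_def by measurable
    then show ?thesis using measurable_cong_sets[OF sets_Gamma refl] by blast
  qed
  have Finc: "incseq F"
    by (intro monoI le_funI) (auto simp: F_def intro!: ennreal_leI)
  have Fsup: "(SUP i. F i y) = ennreal (V y)" for y
  proof (rule antisym)
    show "(SUP i. F i y) \<le> ennreal (V y)" by (intro SUP_least) (auto simp: F_def intro!: ennreal_leI)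
    have "V y \<le> real (Suc (nat \<lceil>V y\<rceil>))" by linarith
    then have "F (nat \<lceil>V y\<rceil>) y = ennreal (V y)" by (simp add: F_def)
    then show "ennreal (V y) \<le> (SUP i. F i y)" by (metis SUP_upper UNIV_I)
  qed
  have Fb: "(\<integral>\<^sup>+y. F i y \<partial>\<Gamma>) \<le> ennreal (V x0 + L')" for i
  proof -
    define h where "h y = min (V y) (real (Suc i))" for y
    have hm: "h \<in> borel_measurable S" unfolding h_def by measurable
    have h0: "0 \<le> h y \<and> h y \<le> real (Suc i)" for y using V_ge1[of y] by (simp add: h_def)
    have hle: "(\<integral>y. h y \<partial>Pn n x0) \<le> V x0 + L'" for n
    proof -
      interpret prob_space "Pn n x0" by (rule mu_prob)
      have hmP: "h \<in> borel_measurable (Pn n x0)" using hm measurable_cong_sets[OF mu_sets refl] by blast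
      have "(\<integral>y. h y \<partial>Pn n x0) \<le> (\<integral>y. V y \<partial>Pn n x0)"
      proof (rule integral_mono)
        show "integrable (Pn n x0) h" using hmP h0 by (intro integrable_const_bound[where B="real (Suc i)"]) auto
        show "integrable (Pn n x0) V" using intV_bound[OF x0_space] by simp
        fix y assume "y \<in> space (Pn n x0)"
        show "h y \<le> V y" by (simp add: h_def)
      qed
      then show ?thesis using intV_bound[OF x0_space, of n] by simp
    qed
    have hG: "(\<integral>y. h y \<partial>\<Gamma>) \<le> V x0 + L'"
    proof (rule LIMSEQ_le_const)
      show "(\<lambda>n. V x0 + L' + real (Suc i) * e n) \<longlonglongrightarrow> V x0 + L'"
        using tendsto_add[OF tendsto_const tendsto_mult[OF tendsto_const e_lim], of "V x0 + L'" "real (Suc i)"] by simp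
      have "(\<integral>y. h y \<partial>\<Gamma>) \<le> V x0 + L' + real (Suc i) * e n" for n
        using cmpB(1)[OF hm _ , of "real (Suc i)" n] h0 hle[of n] by force
      then show "\<exists>N. \<forall>n\<ge>N. (\<integral>y. h y \<partial>\<Gamma>) \<le> V x0 + L' + real (Suc i) * e n" by blast
    qed
    interpret prob_space \<Gamma> by (rule prob_Gamma)
    have hmG: "h \<in> borel_measurable \<Gamma>" using hm measurable_cong_sets[OF sets_Gamma refl] by blast
    have "(\<integral>\<^sup>+y. F i y \<partial>\<Gamma>) = ennreal (\<integral>y. h y \<partial>\<Gamma>)"
      unfolding F_def h_def[symmetric]
      by (rule nn_integral_eq_integral) (use hmG h0 in \<open>auto intro!: integrable_const_bound[where B="real (Suc i)"]\<close>)
    also have "\<dots> \<le> ennreal (V x0 + L')" using hG by (rule ennreal_leI)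
    finally show ?thesis .
  qed
  have "(\<integral>\<^sup>+y. ennreal (V y) \<partial>\<Gamma>) = (\<integral>\<^sup>+y. (SUP i. F i y) \<partial>\<Gamma>)" by (simp add: Fsup)
  also have "\<dots> = (SUP i. (\<integral>\<^sup>+y. F i y \<partial>\<Gamma>))" by (rule nn_integral_monotone_convergence_SUP[OF Finc Fm])
  also have "\<dots> \<le> ennreal (V x0 + L')" by (intro SUP_least Fb)
  finally show bnd: "(\<integral>\<^sup>+y. ennreal (V y) \<partial>\<Gamma>) \<le> ennreal (V x0 + L')" .
  have VmG: "V \<in> borel_measurable \<Gamma>" using V_meas measurable_cong_sets[OF sets_Gamma refl] by blast
  show "integrable \<Gamma> V"
    by (rule integrableI_nonneg[OF VmG]) (use V_ge1 bnd in \<open>auto intro: AE_I2 order_trans[OF zero_le_one] le_less_trans\<close>)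
qed


lemma ergodic_bound:
  fixes g :: "(nat \<Rightarrow> real) \<Rightarrow> real"
  assumes x: "x \<in> space S" and g[measurable]: "g \<in> borel_measurable S"
    and gb: "\<forall>y\<in>space S. \<bar>g y\<bar> \<le> V y"
  shows "integrable (Pn n x) g \<and> integrable \<Gamma> g \<and>
     \<bar>(\<integral>y. g y \<partial>Pn n x) - (\<integral>y. g y \<partial>\<Gamma>)\<bar> \<le> (B0 * (2 + \<beta> + \<beta> * (V x0 + L')) / \<rho>1) * \<theta> ^ n * V x"
proof -
  have gb1: "\<forall>y\<in>space S. \<bar>g y\<bar> \<le> 1 * V y" using gb by simp
  have iP: "integrable (Pn n x) g" by (rule int_Pn[OF x g gb1])
  interpret G: prob_space \<Gamma> by (rule prob_Gamma)
  have spG: "space \<Gamma> = space S" by (rule space_Gamma)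
  have gG: "g \<in> borel_measurable \<Gamma>" using g measurable_cong_sets[OF sets_Gamma refl] by blast
  have iG: "integrable \<Gamma> g"
  proof (rule Bochner_Integration.integrable_bound[OF Gamma_V(1) gG])
    show "AE y in \<Gamma>. norm (g y) \<le> norm (V y)"
      using gb spG V_ge1 by (auto intro!: AE_I2 simp: abs_of_pos less_le_trans[OF zero_less_one])
  qed
  define G where "G y = (\<integral>z. g z \<partial>Pn n y)" for y
  have iK: "integrable (Pn n y) g" if "y \<in> space \<Gamma>" for y using int_Pn[OF _ g gb1] that spG by auto
  have iB: "integrable (bind \<Gamma> (Pn n)) g" using iG invariant_n by simp
  have ib: "integrable \<Gamma> G \<and> (\<integral>z. g z \<partial>bind \<Gamma> (Pn n)) = (\<integral>y. G y \<partial>\<Gamma>)"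
    using integral_bind_real[OF Pn_Gamma_meas g iK iB] unfolding G_def by simp
  then have eq: "(\<integral>y. g y \<partial>\<Gamma>) = (\<integral>y. G y \<partial>\<Gamma>)" using invariant_n by simp
  define c where "c = \<rho> ^ (n div p) * B0"
  have c0: "0 \<le> c" unfolding c_def using rho_bounds B0_nonneg by simp
  have "(\<integral>y. g y \<partial>Pn n x) - (\<integral>y. g y \<partial>\<Gamma>) = (\<integral>y. G x - G y \<partial>\<Gamma>)"
  proof -
    have "(\<integral>y. G x - G y \<partial>\<Gamma>) = (\<integral>y. G x \<partial>\<Gamma>) - (\<integral>y. G y \<partial>\<Gamma>)"
      using ib by (intro Bochner_Integration.integral_diff) auto
    then show ?thesis using eq G.prob_space by (simp add: G_def)
  qed
  also have "\<bar>\<dots>\<bar> \<le> (\<integral>y. \<bar>G x - G y\<bar> \<partial>\<Gamma>)" by (rule integral_abs_bound)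
  also have "\<dots> \<le> (\<integral>y. c * (2 + \<beta> * V x) + (c * \<beta>) * V y \<partial>\<Gamma>)"
  proof (rule integral_mono)
    show "integrable \<Gamma> (\<lambda>y. \<bar>G x - G y\<bar>)" using ib by auto
    show "integrable \<Gamma> (\<lambda>y. c * (2 + \<beta> * V x) + (c * \<beta>) * V y)" using Gamma_V(1) by auto
    fix y assume "y \<in> space \<Gamma>"
    then have y: "y \<in> space S" using spG by simp
    have "\<bar>G x - G y\<bar> \<le> \<rho> ^ (n div p) * B0 * (2 + \<beta> * V x + \<beta> * V y)"
      unfolding G_def by (rule Gbound[OF g gb x y])
    then show "\<bar>G x - G y\<bar> \<le> c * (2 + \<beta> * V x) + (c * \<beta>) * V y" by (simp add: c_def algebra_simps)
  qed
  also have "\<dots> = c * (2 + \<beta> * V x) + (c * \<beta>) * (\<integral>y. V y \<partial>\<Gamma>)"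
    using Gamma_V(1) G.prob_space by simp
  also have "\<dots> \<le> c * (2 + \<beta> * V x) + (c * \<beta>) * (V x0 + L')"
  proof -
    have "ennreal (\<integral>y. V y \<partial>\<Gamma>) = (\<integral>\<^sup>+y. ennreal (V y) \<partial>\<Gamma>)"
      by (rule nn_integral_eq_integral[symmetric, OF Gamma_V(1)]) (use V_ge1 in \<open>auto intro: AE_I2 order_trans[OF zero_le_one]\<close>)
    then have "ennreal (\<integral>y. V y \<partial>\<Gamma>) \<le> ennreal (V x0 + L')" using Gamma_V(2) by simp
    moreover have "0 \<le> V x0 + L'" using V_ge1[of x0] L'_nonneg by simp
    ultimately have "(\<integral>y. V y \<partial>\<Gamma>) \<le> V x0 + L'" by (simp only: ennreal_le_iff)
    then show ?thesis using c0 beta_pos by (intro add_left_mono mult_left_mono) auto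
  qed
  also have "\<dots> \<le> c * ((2 + \<beta> + \<beta> * (V x0 + L')) * V x)"
  proof -
    have V1: "1 \<le> V x" by (rule V_ge1)
    have "2 \<le> 2 * V x" using V1 by simp
    moreover have "\<beta> * (V x0 + L') * 1 \<le> \<beta> * (V x0 + L') * V x"
    proof -
      have "0 \<le> \<beta> * (V x0 + L')" using beta_pos V_ge1[of x0] L'_nonneg by simp
      from mult_left_mono[OF V1 this] show ?thesis .
    qed
    ultimately have "2 + \<beta> * V x + \<beta> * (V x0 + L') \<le> (2 + \<beta> + \<beta> * (V x0 + L')) * V x"
      by (simp add: algebra_simps)
    from mult_left_mono[OF this c0] show ?thesis by (simp add: algebra_simps)
  qed
  also have "\<dots> \<le> (B0 * (2 + \<beta> + \<beta> * (V x0 + L')) / \<rho>1) * \<theta> ^ n * V x"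
  proof -
    have k0: "0 \<le> B0 * ((2 + \<beta> + \<beta> * (V x0 + L')) * V x)"
      using B0_nonneg beta_pos V_ge1[of x] V_ge1[of x0] L'_nonneg by simp
    have "c * ((2 + \<beta> + \<beta> * (V x0 + L')) * V x) = \<rho> ^ (n div p) * (B0 * ((2 + \<beta> + \<beta> * (V x0 + L')) * V x))"
      by (simp add: c_def)
    also have "\<dots> \<le> (\<theta> ^ n / \<rho>1) * (B0 * ((2 + \<beta> + \<beta> * (V x0 + L')) * V x))"
      by (rule mult_right_mono[OF rate k0])
    also have "\<dots> = (B0 * (2 + \<beta> + \<beta> * (V x0 + L')) / \<rho>1) * \<theta> ^ n * V x" by simp
    finally show ?thesis .
  qed
  finally show ?thesis using iP iG by simp
qed

lemma moment_Gamma: "i < p \<Longrightarrow> (\<integral>\<^sup>+y. ennreal (\<bar>y i\<bar> powr r) \<partial>\<Gamma>) < \<infinity>"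
proof -
  assume i: "i < p"
  have di: "d i > 0" by (rule d_pos[OF i])
  have "(\<integral>\<^sup>+y. ennreal (\<bar>y i\<bar> powr r) \<partial>\<Gamma>) \<le> (\<integral>\<^sup>+y. ennreal (1 / d i) * ennreal (V y) \<partial>\<Gamma>)"
  proof (rule nn_integral_mono)
    fix y
    have "d i * \<bar>y i\<bar> powr r \<le> (\<Sum>j<p. d j * \<bar>y j\<bar> powr r)"
      using i d_nonneg by (intro member_le_sum) auto
    then have "d i * \<bar>y i\<bar> powr r \<le> V y" unfolding V_def by simp
    then have "\<bar>y i\<bar> powr r \<le> 1 / d i * V y" using di by (simp add: field_simps)
    then have "ennreal (\<bar>y i\<bar> powr r) \<le> ennreal (1 / d i * V y)" by (rule ennreal_leI)
    also have "\<dots> = ennreal (1 / d i) * ennreal (V y)" using di V_ge1[of y] by (intro ennreal_mult) auto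
    finally show "ennreal (\<bar>y i\<bar> powr r) \<le> ennreal (1 / d i) * ennreal (V y)" .
  qed
  also have "\<dots> = ennreal (1 / d i) * (\<integral>\<^sup>+y. ennreal (V y) \<partial>\<Gamma>)"
  proof (rule nn_integral_cmult)
    have "(\<lambda>y. ennreal (V y)) \<in> borel_measurable S" by measurable
    then show "(\<lambda>y. ennreal (V y)) \<in> borel_measurable \<Gamma>"
      using measurable_cong_sets[OF sets_Gamma refl] by blast
  qed
  also have "\<dots> \<le> ennreal (1 / d i) * ennreal (V x0 + L')"
    by (intro mult_left_mono Gamma_V(2)) simp
  also have "\<dots> < \<infinity>" by (simp add: ennreal_mult_less_top)
  finally show ?thesis .
qed

lemma main_result:
  "\<exists>d :: nat \<Rightarrow> real. (\<forall>i<p. d i > 0) \<and>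
           (\<exists>\<Gamma>. V_uniformly_ergodic p a b f (\<lambda>x. 1 + (\<Sum>i<p. d i * \<bar>x i\<bar> powr r)) \<Gamma>
               \<and> (\<forall>i<p. (\<integral>\<^sup>+ y. ennreal (\<bar>y i\<bar> powr r) \<partial>\<Gamma>) < \<infinity>))"
proof (intro exI conjI allI impI)
  show "\<And>i. i < p \<Longrightarrow> 0 < d i" by (rule d_pos)
  show "\<And>i. i < p \<Longrightarrow> (\<integral>\<^sup>+ y. ennreal (\<bar>y i\<bar> powr r) \<partial>\<Gamma>) < \<infinity>" by (rule moment_Gamma)
  have Veq: "(\<lambda>x. 1 + (\<Sum>i<p. d i * \<bar>x i\<bar> powr r)) = V" by (simp add: V_def[abs_def])
  show "V_uniformly_ergodic p a b f (\<lambda>x. 1 + (\<Sum>i<p. d i * \<bar>x i\<bar> powr r)) \<Gamma>"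
    unfolding Veq V_uniformly_ergodic_def ar_stationary_def
  proof (intro conjI)
    show "prob_space \<Gamma>" by (rule prob_Gamma)
    show "sets \<Gamma> = sets S" by (rule sets_Gamma)
    show "bind \<Gamma> P = \<Gamma>" by (rule invariant)
    show "\<exists>M \<beta>. 0 \<le> \<beta> \<and> \<beta> < 1 \<and> (\<forall>n x g. x \<in> space S \<longrightarrow> g \<in> borel_measurable S \<longrightarrow>
           (\<forall>y\<in>space S. \<bar>g y\<bar> \<le> V y) \<longrightarrow>
           integrable (Pn n x) g \<and> integrable \<Gamma> g \<and>
           \<bar>(\<integral>y. g y \<partial>Pn n x) - (\<integral>y. g y \<partial>\<Gamma>)\<bar> \<le> M * \<beta> ^ n * V x)"
      using ergodic_bound theta_bounds by (intro exI[of _ "B0 * (2 + \<beta> + \<beta> * (V x0 + L')) / \<rho>1"] exI[of _ \<theta>]) auto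
  qed
qed


end

theorem theorem2p1:
  fixes p :: nat and a b :: "(nat \<Rightarrow> real) \<Rightarrow> real" and f :: "real \<Rightarrow> real"
    and c :: "nat \<Rightarrow> real" and r K :: real
  assumes p_pos: "p \<ge> 1"
    and a_meas: "a \<in> borel_measurable (stateM p)"
    and b_meas: "b \<in> borel_measurable (stateM p)"
    and a_pw: "fin_piecewise_continuous p a"
    and b_pw: "fin_piecewise_continuous p b"
    and f_meas: "f \<in> borel_measurable borel"
    and f_nonneg: "\<And>u. f u \<ge> 0"
    and f_dens: "(\<integral>\<^sup>+ u. ennreal (f u) \<partial>lborel) = 1"
    \<comment> \<open>A.1\<close>
    and f_loc_pos: "\<And>R. \<exists>\<delta>>0. \<forall>u. \<bar>u\<bar> \<le> R \<longrightarrow> \<delta> \<le> f u"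
    and b_pos: "\<And>x. x \<in> space (stateM p) \<Longrightarrow> b x > 0"
    and b_loc: "\<And>R. \<exists>\<delta>>0. \<exists>M. \<forall>x\<in>space (stateM p).
                   pnorm p x \<le> R \<longrightarrow> \<delta> \<le> b x \<and> b x \<le> M"
    \<comment> \<open>A.2\<close>
    and f_tail: "\<exists>M. \<forall>u. (1 + \<bar>u\<bar>) * f u \<le> M"
    and e_moment: "\<exists>r0>0. (\<integral>\<^sup>+ u. ennreal (\<bar>u\<bar> powr r0 * f u) \<partial>lborel) < \<infinity>"
    \<comment> \<open>A.3\<close>
    and lin_growth: "\<exists>C. \<forall>x\<in>space (stateM p).
                   \<bar>a x\<bar> \<le> C * (1 + pnorm p x) \<and> \<bar>b x\<bar> \<le> C * (1 + pnorm p x)"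
    \<comment> \<open>moment condition\<close>
    and c_nonneg: "\<And>i. i < p \<Longrightarrow> c i \<ge> 0"
    and c_sum: "(\<Sum>i<p. c i) < 1"
    and r_pos: "r > 0"
    and drift: "\<And>x. x \<in> space (stateM p) \<Longrightarrow>
       (\<integral>\<^sup>+ y. ennreal (\<bar>y 0\<bar> powr r) \<partial>ar_step p a b f x)
         \<le> ennreal (K + (\<Sum>i<p. c i * \<bar>x i\<bar> powr r))"
  shows "\<exists>d :: nat \<Rightarrow> real. (\<forall>i<p. d i > 0) \<and>
           (\<exists>\<Gamma>. V_uniformly_ergodic p a b f (\<lambda>x. 1 + (\<Sum>i<p. d i * \<bar>x i\<bar> powr r)) \<Gamma>
               \<and> (\<forall>i<p. (\<integral>\<^sup>+ y. ennreal (\<bar>y i\<bar> powr r) \<partial>\<Gamma>) < \<infinity>))"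
  proof -
  interpret arch_full p a b f c r K
    apply unfold_locales
    using assms apply -
    by assumption+
  show ?thesis by (rule main_result)
qed

end
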